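(* Let $\sigma\in(0,\infty)$, $n\geqslant1$, $\eta=3$, and $(v_0,v_1,v_2)\in\mathcal{B}_{\sigma}$. Then the solution $v$ of $(\mathrm{L})$ satisfies, for all $t\geqslant0$, $$\|v(t,\cdot)\|_{L^2}\lesssim (1+t)^{-\frac{3n-8\sigma}{4\sigma}}\|(v_0,v_1,v_2)\|_{\mathcal{B}_{\sigma}},\qquad \|v(t,\cdot)\|_{\dot{H}^{\frac{4}{3}\sigma}}\lesssim (1+t)^{-\frac{3n}{4\sigma}}\|(v_0,v_1,v_2)\|_{\mathcal{B}_{\sigma}}.$$ Moreover, defining $w_{[3]}$ by $\widehat{w}_{[3]}(t,\xi):=\frac{t^2}{2}\mathrm{e}^{-|\xi|^{\frac{2}{3}\sigma }t}\,\widehat{v}_2(\xi)$, one has $$\|v(t,\cdot)-w_{[3]}(t,\cdot)\|_{L^2}\lesssim (1+t)^{-\frac{3n-4\sigma}{4\sigma}}\|(v_0,v_1,v_2)\|_{\mathcal{B}_{\sigma}},\quad \|v(t,\cdot)-w_{[3]}(t,\cdot)\|_{\dot{H}^{\frac{4}{3}\sigma}}\lesssim (1+t)^{-\frac{3n+4\sigma}{4\sigma}}\|(v_0,v_1,v_2)\|_{\mathcal{B}_{\sigma}}.$$ Finally, if $v_0\equiv0\equiv v_1$ and $v_2\in L^2$, then $\|v(t,\cdot)\|_{\dot{H}^{\frac{4}{3}\sigma}}\lesssim\|v_2\|_{L^2}$ for all $t\geqslant0$.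
   Context: For $\sigma>0$, $\alpha\in[0,1]$, $\mathcal{A}^{\alpha}=(-\Delta)^{\sigma\alpha}$ is the Fourier multiplier $|\xi|^{2\sigma\alpha}$, $\mathcal{A}=(-\Delta)^\sigma$. The linear problem $(\mathrm{L})$ is $v_{ttt}+\mathcal{A}v+\eta\mathcal{A}^{\frac{1}{3}}v_{tt}+\eta\mathcal{A}^{\frac{2}{3}}v_t=0$ for $x\in\mathbb{R}^n$, $t>0$, $v(0)=v_0$, $v_t(0)=v_1$, $v_{tt}(0)=v_2$, solved via partial Fourier transform in $x$. $\mathcal{B}_{\sigma}:=(H^{\frac{4}{3}\sigma}\cap L^1)\times (H^{\frac{2}{3}\sigma}\cap L^1)\times (L^2\cap L^1)$ with the sum norm; $\dot H^s$ has norm $\||\xi|^s\hat f\|_{L^2}$. $\lesssim$ is up to a constant independent of $t$ and the data. *)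

theory Defs
  imports "HOL-Analysis.Analysis"
begin

definition fourier :: "(real^'n \<Rightarrow> complex) \<Rightarrow> real^'n \<Rightarrow> complex" where
  "fourier f \<xi> = integral\<^sup>L lborel (\<lambda>x. cis (- (x \<bullet> \<xi>)) * f x)"

definition in_L1 :: "(real^'n \<Rightarrow> complex) \<Rightarrow> bool" where
  "in_L1 f \<longleftrightarrow> integrable lborel f"

definition L1norm :: "(real^'n \<Rightarrow> complex) \<Rightarrow> real" where
  "L1norm f = integral\<^sup>L lborel (\<lambda>x. cmod (f x))"

definition sq_int :: "(real^'n \<Rightarrow> complex) \<Rightarrow> bool" where
  "sq_int f \<longleftrightarrow> f \<in> borel_measurable lborel \<and> integrable lborel (\<lambda>x. (cmod (f x))\<^sup>2)"

definition L2norm :: "(real^'n \<Rightarrow> complex) \<Rightarrow> real" where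
  "L2norm f = sqrt (integral\<^sup>L lborel (\<lambda>x. (cmod (f x))\<^sup>2))"

definition hom_weight :: "real \<Rightarrow> (real^'n \<Rightarrow> complex) \<Rightarrow> real^'n \<Rightarrow> complex" where
  "hom_weight s g \<xi> = complex_of_real (norm \<xi> powr s) * g \<xi>"

definition inh_weight :: "real \<Rightarrow> (real^'n \<Rightarrow> complex) \<Rightarrow> real^'n \<Rightarrow> complex" where
  "inh_weight s g \<xi> = complex_of_real ((1 + (norm \<xi>)\<^sup>2) powr (s / 2)) * g \<xi>"

definition in_Hs_L1 :: "real \<Rightarrow> (real^'n \<Rightarrow> complex) \<Rightarrow> bool" where
  "in_Hs_L1 s f \<longleftrightarrow> in_L1 f \<and> sq_int (inh_weight s (fourier f))"

definition Hs_L1_norm :: "real \<Rightarrow> (real^'n \<Rightarrow> complex) \<Rightarrow> real" where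
  "Hs_L1_norm s f = L2norm (inh_weight s (fourier f)) + L1norm f"

definition in_B :: "real \<Rightarrow> (real^'n \<Rightarrow> complex) \<Rightarrow> (real^'n \<Rightarrow> complex) \<Rightarrow> (real^'n \<Rightarrow> complex) \<Rightarrow> bool" where
  "in_B \<sigma> v0 v1 v2 \<longleftrightarrow> in_Hs_L1 (4*\<sigma>/3) v0 \<and> in_Hs_L1 (2*\<sigma>/3) v1 \<and> in_Hs_L1 0 v2"

definition B_norm :: "real \<Rightarrow> (real^'n \<Rightarrow> complex) \<Rightarrow> (real^'n \<Rightarrow> complex) \<Rightarrow> (real^'n \<Rightarrow> complex) \<Rightarrow> real" where
  "B_norm \<sigma> v0 v1 v2 = Hs_L1_norm (4*\<sigma>/3) v0 + Hs_L1_norm (2*\<sigma>/3) v1 + Hs_L1_norm 0 v2"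

text \<open>V(t,xi) is the partial Fourier transform of a solution of (L): for each frequency xi,
  t \<mapsto> V t xi solves the third order ODE
  V''' + |xi|^(2s) V + eta |xi|^(2s/3) V'' + eta |xi|^(4s/3) V' = 0 (t > 0)
  with V(0)=u0 xi, V'(0)=u1 xi, V''(0)=u2 xi (one-sided derivatives at t = 0).\<close>
definition solves_L :: "real \<Rightarrow> real \<Rightarrow> (real^'n \<Rightarrow> complex) \<Rightarrow> (real^'n \<Rightarrow> complex)
    \<Rightarrow> (real^'n \<Rightarrow> complex) \<Rightarrow> (real \<Rightarrow> real^'n \<Rightarrow> complex) \<Rightarrow> bool" where
  "solves_L \<sigma> \<eta> u0 u1 u2 V \<longleftrightarrow>
    (\<forall>\<xi>. \<exists>D1 D2 D3 :: real \<Rightarrow> complex.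
       (\<forall>t\<ge>0. ((\<lambda>s. V s \<xi>) has_vector_derivative D1 t) (at t within {0..})) \<and>
       (\<forall>t\<ge>0. (D1 has_vector_derivative D2 t) (at t within {0..})) \<and>
       (\<forall>t>0. (D2 has_vector_derivative D3 t) (at t)) \<and>
       (\<forall>t>0. D3 t + complex_of_real (norm \<xi> powr (2*\<sigma>)) * V t \<xi>
                + complex_of_real (\<eta> * norm \<xi> powr (2*\<sigma>/3)) * D2 t
                + complex_of_real (\<eta> * norm \<xi> powr (4*\<sigma>/3)) * D1 t = 0) \<and>
       V 0 \<xi> = u0 \<xi> \<and> D1 0 = u1 \<xi> \<and> D2 0 = u2 \<xi>)"

end

theory Submission
  imports Defs "HOL-Real_Asymp.Real_Asymp"
begin

lemma expc_deriv: "((\<lambda>x. complex_of_real (exp (a*x))) has_vector_derivative complex_of_real (a * exp (a*t))) (at t within S)"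
  by (auto intro!: derivative_eq_intros)

lemma P_deriv:
  fixes f g :: "real \<Rightarrow> complex"
  assumes "(f has_vector_derivative f') (at t within S)" "(g has_vector_derivative g') (at t within S)"
  shows "((\<lambda>x. complex_of_real (exp (a*x)) * (f x + of_real a * g x)) has_vector_derivative
     complex_of_real (exp (a*t)) * (f' + of_real a * f t + of_real a * g' + of_real (a^2) * g t)) (at t within S)"
proof -
  have "((\<lambda>x. f x + of_real a * g x) has_vector_derivative f' + of_real a * g') (at t within S)"
    using assms by (intro has_vector_derivative_add has_vector_derivative_mult_right)
  from has_vector_derivative_mult[OF expc_deriv[of a t S] this]
  show ?thesis by (rule has_vector_derivative_eq_rhs) (simp add: algebra_simps power2_eq_square)
qed

lemma zero_deriv_const:
  fixes f :: "real \<Rightarrow> 'a::banach"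
  assumes d: "\<forall>t\<ge>0. (f has_vector_derivative f' t) (at t within {0..})"
    and z: "\<forall>t>0. f' t = 0" and t: "t \<ge> 0"
  shows "f t = f 0"
proof (rule has_derivative_zero_unique_strong_interval[of "{0}" 0 t f])
  show "continuous_on {0..t} f"
    unfolding continuous_on_eq_continuous_within
  proof
    fix x assume x: "x \<in> {0..t}"
    have "continuous (at x within {0..}) f"
      using d x by (intro has_vector_derivative_continuous) auto
    then show "continuous (at x within {0..t}) f"
      by (rule continuous_within_subset) auto
  qed
  fix x assume x: "x \<in> {0..t} - {0}"
  have "(f has_vector_derivative f' x) (at x within {0..})" using d x by auto
  then have "(f has_vector_derivative f' x) (at x within {0..t})"
    by (rule has_vector_derivative_within_subset) auto
  then show "(f has_derivative (\<lambda>h. 0)) (at x within {0..t})"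
    using z x by (simp add: has_vector_derivative_def)
qed (use t in auto)

lemma deriv_within_at0:
  fixes f :: "real \<Rightarrow> 'a::real_normed_vector"
  assumes "(f has_vector_derivative D) (at 0 within {0..})"
    and "\<forall>t\<ge>0. f t = g t" and "(g has_vector_derivative D') (at 0 within {0..})"
  shows "D = D'"
proof (rule vector_derivative_unique_within[of 0 "{0..}" f])
  show "at (0::real) within {0..} \<noteq> bot"
    by (simp add: at_within_Ici_at_right)
  show "(f has_vector_derivative D') (at 0 within {0..})"
    by (rule has_vector_derivative_transform_within[OF assms(3), of 1]) (use assms(2) in auto)
qed (fact assms(1))

lemma ode_unique:
  fixes a :: real and V D1 D2 D3 :: "real \<Rightarrow> complex"
  assumes d1: "\<forall>t\<ge>0. (V has_vector_derivative D1 t) (at t within {0..})"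
    and d2: "\<forall>t\<ge>0. (D1 has_vector_derivative D2 t) (at t within {0..})"
    and d3: "\<forall>t>0. (D2 has_vector_derivative D3 t) (at t)"
    and eq: "\<forall>t>0. D3 t + of_real (a^3) * V t + of_real (3*a) * D2 t + of_real (3*a^2) * D1 t = 0"
    and t: "t \<ge> 0"
  shows "V t = of_real (exp (-(a*t))) * (V 0 + (D1 0 + of_real a * V 0) * of_real t
            + (D2 0 + 2 * of_real a * D1 0 + of_real (a^2) * V 0) * of_real (t^2/2))"
proof -
  define e where "e x = complex_of_real (exp (a*x))" for x
  define P0 where "P0 x = e x * V x" for x
  define P1 where "P1 x = e x * (D1 x + of_real a * V x)" for x
  define P2 where "P2 x = e x * (D2 x + of_real a * (2 * D1 x + of_real a * V x))" for x
  define c0 where "c0 = V 0"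
  define c1 where "c1 = D1 0 + of_real a * V 0"
  define c2 where "c2 = D2 0 + 2 * of_real a * D1 0 + of_real (a^2) * V 0"
  have e0: "e 0 = 1" by (simp add: e_def)
  have dP0: "(P0 has_vector_derivative P1 x) (at x within {0..})" if "x \<ge> 0" for x
  proof -
    have "((\<lambda>x. e x * V x) has_vector_derivative e x * D1 x + of_real (a * exp (a*x)) * V x) (at x within {0..})"
      unfolding e_def using d1 that by (intro has_vector_derivative_mult expc_deriv) auto
    then show ?thesis unfolding P0_def[abs_def]
      by (rule has_vector_derivative_eq_rhs) (simp add: P1_def e_def algebra_simps)
  qed
  have dP1: "(P1 has_vector_derivative P2 x) (at x within S)"
    if "(V has_vector_derivative D1 x) (at x within S)" "(D1 has_vector_derivative D2 x) (at x within S)" for x S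
  proof -
    from P_deriv[OF that(2) that(1), of a]
    show ?thesis unfolding P1_def[abs_def] e_def
      by (rule has_vector_derivative_eq_rhs) (simp add: P2_def e_def algebra_simps power2_eq_square)
  qed
  have int: "at x within {0..} = at x" if "x > 0" for x :: real
    by (rule at_within_interior) (use that in auto)
  have dP2: "(P2 has_vector_derivative 0) (at x)" if "x > 0" for x
  proof -
    have a1: "(V has_vector_derivative D1 x) (at x)" using d1[rule_format, of x] that int[OF that] by (simp add: less_imp_le)
    have a2: "(D1 has_vector_derivative D2 x) (at x)" using d2[rule_format, of x] that int[OF that] by (simp add: less_imp_le)
    have a3: "((\<lambda>x. 2 * D1 x + of_real a * V x) has_vector_derivative 2 * D2 x + of_real a * D1 x) (at x)"
      using a1 a2 by (intro has_vector_derivative_add has_vector_derivative_mult_right)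
    from P_deriv[OF d3[rule_format, OF that] a3, of a]
    show ?thesis unfolding P2_def[abs_def] e_def
      apply (rule has_vector_derivative_eq_rhs)
      using eq[rule_format, OF that]
      by (simp add: algebra_simps power2_eq_square power3_eq_cube)
  qed
  obtain c where c: "\<And>x. x > 0 \<Longrightarrow> P2 x = c"
  proof -
    have "P2 constant_on {0<..}"
    proof (rule has_derivative_zero_connected_constant_on[of _ "{}"])
      show "continuous_on {0<..} P2"
        using dP2 by (intro continuous_at_imp_continuous_on ballI has_vector_derivative_continuous) auto
      show "\<forall>x\<in>{0<..} - {}. (P2 has_derivative (\<lambda>h. 0)) (at x within {0<..})"
        using dP2 by (auto simp: has_vector_derivative_def intro: has_derivative_at_withinI)
    qed auto
    then show ?thesis using that unfolding constant_on_def by auto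
  qed
  have dP1': "(P1 has_vector_derivative P2 x) (at x within {0..})" if "x \<ge> 0" for x
    using dP1 d1 d2 that by auto
  have P1lin: "P1 x = c1 + of_real x * c" if "x \<ge> 0" for x
  proof -
    have "(\<lambda>x. P1 x - of_real x * c) x = (\<lambda>x. P1 x - of_real x * c) 0"
    proof (rule zero_deriv_const[where f' = "\<lambda>x. P2 x - c"])
      show "\<forall>t\<ge>0. ((\<lambda>x. P1 x - complex_of_real x * c) has_vector_derivative P2 t - c) (at t within {0..})"
      proof (intro allI impI)
        fix t :: real assume "t \<ge> 0"
        have "((\<lambda>x. complex_of_real x * c) has_vector_derivative 1 * c) (at t within {0..})"
          by (intro has_vector_derivative_mult_left has_vector_derivative_of_real) (auto intro!: derivative_eq_intros)
        then show "((\<lambda>x. P1 x - complex_of_real x * c) has_vector_derivative P2 t - c) (at t within {0..})"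
          using dP1'[OF \<open>t \<ge> 0\<close>] by (auto intro: has_vector_derivative_diff)
      qed
    qed (use c that in auto)
    then show ?thesis by (simp add: P1_def e0 c1_def algebra_simps)
  qed
  have "P2 0 = c"
  proof (rule deriv_within_at0[OF dP1'[of 0]])
    show "\<forall>t\<ge>0. P1 t = c1 + of_real t * c" using P1lin by auto
    show "((\<lambda>t. c1 + complex_of_real t * c) has_vector_derivative c) (at 0 within {0..})"
      by (auto intro!: derivative_eq_intros)
  qed auto
  then have cc2: "c2 = c" by (simp add: P2_def c2_def e0 algebra_simps power2_eq_square)
  have "(\<lambda>x. P0 x - (c0 + c1 * of_real x + c2 * of_real (x^2/2))) t
        = (\<lambda>x. P0 x - (c0 + c1 * of_real x + c2 * of_real (x^2/2))) 0"
  proof (rule zero_deriv_const[where f' = "\<lambda>x. P1 x - (c1 + c2 * of_real x)"])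
    show "\<forall>t\<ge>0. ((\<lambda>x. P0 x - (c0 + c1 * of_real x + c2 * of_real (x^2/2))) has_vector_derivative
        P1 t - (c1 + c2 * of_real t)) (at t within {0..})"
    proof (intro allI impI)
      fix t :: real assume t: "t \<ge> 0"
      have q: "((\<lambda>x. complex_of_real (x^2/2)) has_vector_derivative of_real t) (at t within {0..})"
        by (rule has_vector_derivative_of_real) (auto intro!: derivative_eq_intros)
      have l: "((\<lambda>x. complex_of_real x) has_vector_derivative 1) (at t within {0..})"
        by (rule has_vector_derivative_eq_rhs[OF has_vector_derivative_of_real[OF DERIV_ident]]) simp
      have "((\<lambda>x. c0 + c1 * of_real x + c2 * of_real (x^2/2)) has_vector_derivative (0 + c1 * 1 + c2 * of_real t)) (at t within {0..})"
        by (intro has_vector_derivative_add has_vector_derivative_mult_right q l has_vector_derivative_const)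
      then have "((\<lambda>x. c0 + c1 * of_real x + c2 * of_real (x^2/2)) has_vector_derivative (c1 + c2 * of_real t)) (at t within {0..})"
        by simp
      then show "((\<lambda>x. P0 x - (c0 + c1 * of_real x + c2 * of_real (x^2/2))) has_vector_derivative
        P1 t - (c1 + c2 * of_real t)) (at t within {0..})"
        using dP0[OF t] by (auto intro: has_vector_derivative_diff)
    qed
    show "\<forall>t>0. P1 t - (c1 + c2 * complex_of_real t) = 0"
      using P1lin cc2 by (auto simp: algebra_simps)
  qed (fact t)
  then have "P0 t = c0 + c1 * of_real t + c2 * of_real (t^2/2)"
    by (simp add: P0_def e0 c0_def)
  then have "V t = of_real (exp (-(a*t))) * (c0 + c1 * of_real t + c2 * of_real (t^2/2))"
    unfolding P0_def e_def
    by (metis (no_types, lifting) exp_minus_inverse mult.assoc mult.left_neutral of_real_1 of_real_mult)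
  then show ?thesis by (simp add: c0_def c1_def c2_def)
qed

lemma powr_exp_bound:
  fixes m :: real assumes m: "m \<ge> 0"
  shows "\<exists>C>0. \<forall>x\<ge>0. x powr m \<le> C * exp (x/2)"
proof -
  have "((\<lambda>x. x powr m / exp (x/2)) \<longlongrightarrow> 0) at_top" by real_asymp
  then have "eventually (\<lambda>x. x powr m / exp (x/2) < 1) at_top"
    by (rule order_tendstoD) simp
  then obtain X where X: "\<And>x. x \<ge> X \<Longrightarrow> x powr m / exp (x/2) < 1"
    by (auto simp: eventually_at_top_linorder)
  define X' where "X' = max X 1"
  define C where "C = max 1 (X' powr m)"
  have "x powr m \<le> C * exp (x/2)" if x: "x \<ge> 0" for x
  proof (cases "x \<ge> X")
    case True
    then have "x powr m < exp (x/2)" using X[OF True] by (simp add: divide_less_eq)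
    also have "\<dots> \<le> C * exp (x/2)" by (simp add: C_def)
    finally show ?thesis by simp
  next
    case False
    then have "x powr m \<le> X' powr m" using x m unfolding X'_def by (intro powr_mono2) auto
    also have "\<dots> \<le> C" by (simp add: C_def)
    also have "C \<le> C * exp (x/2)"
    proof -
      have "1 \<le> exp (x/2)" using x by simp
      moreover have "C \<ge> 0" by (simp add: C_def)
      ultimately show ?thesis using mult_left_mono[of 1 "exp (x/2)" C] by simp
    qed
    finally show ?thesis .
  qed
  moreover have "C > 0" by (simp add: C_def)
  ultimately show ?thesis by blast
qed

lemma summable_kernel:
  fixes m :: real assumes m: "m \<ge> 0"
  shows "summable (\<lambda>k::nat. exp (- real k) * (real k + 1) powr m)"
proof -
  obtain C where C: "C > 0" "\<And>x. x \<ge> 0 \<Longrightarrow> x powr m \<le> C * exp (x/2)"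
    using powr_exp_bound[OF m] by blast
  show ?thesis
  proof (rule summable_comparison_test[where g = "\<lambda>k. C * exp (1/2) * exp (-1/2) ^ k"])
    show "summable (\<lambda>k. C * exp (1/2) * exp (-1/2) ^ k)"
      by (intro summable_mult summable_geometric) simp
    show "\<exists>N. \<forall>n\<ge>N. norm (exp (- real n) * (real n + 1) powr m) \<le> C * exp (1/2) * exp (-1/2) ^ n"
    proof (intro exI allI impI)
      fix n :: nat
      have "norm (exp (- real n) * (real n + 1) powr m) = exp (- real n) * (real n + 1) powr m" by simp
      also have "\<dots> \<le> exp (- real n) * (C * exp ((real n + 1)/2))"
        using C(2)[of "real n + 1"] by (intro mult_left_mono) auto
      also have "\<dots> = C * exp (1/2) * exp (-1/2) ^ n"
        by (simp add: exp_of_nat_mult[symmetric] exp_add[symmetric] field_simps)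
      finally show "norm (exp (- real n) * (real n + 1) powr m) \<le> C * exp (1/2) * exp (-1/2) ^ n" .
    qed
  qed
qed

lemma kernel_pointwise:
  fixes \<xi> :: "real^'n" and \<beta> t :: real
  assumes \<beta>: "\<beta> > 0" and t: "t > 0"
  shows "ennreal (exp (-(norm \<xi> powr \<beta> * t)))
     \<le> (\<Sum>k. ennreal (exp (- real k)) * indicator (cball 0 (((real k + 1)/t) powr (1/\<beta>))) \<xi>)"
proof -
  define x where "x = norm \<xi> powr \<beta> * t"
  have x0: "x \<ge> 0" using t by (simp add: x_def)
  define j where "j = nat \<lfloor>x\<rfloor>"
  have jx: "real j \<le> x" "x < real j + 1" using x0 unfolding j_def by linarith+
  have "norm \<xi> powr \<beta> < (real j + 1) / t" using jx t by (simp add: x_def pos_less_divide_eq)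
  then have "(norm \<xi> powr \<beta>) powr (1/\<beta>) \<le> ((real j + 1) / t) powr (1/\<beta>)"
    using \<beta> by (intro powr_mono2) auto
  also have "(norm \<xi> powr \<beta>) powr (1/\<beta>) = norm \<xi>" using \<beta> by (simp add: powr_powr)
  finally have inb: "\<xi> \<in> cball 0 (((real j + 1)/t) powr (1/\<beta>))" by simp
  have "ennreal (exp (-(norm \<xi> powr \<beta> * t))) \<le> ennreal (exp (- real j))"
    using jx by (simp add: x_def[symmetric])
  also have "\<dots> = ennreal (exp (- real j)) * indicator (cball 0 (((real j + 1)/t) powr (1/\<beta>))) \<xi>"
    using inb by simp
  also have "\<dots> \<le> (\<Sum>k. ennreal (exp (- real k)) * indicator (cball 0 (((real k + 1)/t) powr (1/\<beta>))) \<xi>)"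
  proof -
    define F where "F = (\<lambda>k::nat. ennreal (exp (- real k)) * indicator (cball 0 (((real k + 1)/t) powr (1/\<beta>))) \<xi>)"
    have "sum F {j} \<le> suminf F" by (rule sum_le_suminf[OF summableI]) auto
    then have "F j \<le> suminf F" by simp
    then show ?thesis by (simp only: F_def)
  qed
  finally show ?thesis .
qed

lemma kernel_bound:
  fixes \<beta> :: real assumes \<beta>: "\<beta> > 0"
  shows "\<exists>K\<ge>0. \<forall>t>0. integrable lborel (\<lambda>\<xi>::real^'n. exp (-(norm \<xi> powr \<beta> * t))) \<and>
           (\<integral>\<xi>. exp (-(norm (\<xi>::real^'n) powr \<beta> * t)) \<partial>lborel) \<le> K * t powr (- real CARD('n) / \<beta>)"
proof -
  define m where "m = real CARD('n) / \<beta>"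
  have m0: "m \<ge> 0" using \<beta> by (simp add: m_def)
  define S where "S = (\<Sum>k. exp (- real k) * (real k + 1) powr m)"
  have sS: "summable (\<lambda>k::nat. exp (- real k) * (real k + 1) powr m)" by (rule summable_kernel[OF m0])
  define \<omega> where "\<omega> = unit_ball_vol (real DIM(real^'n))"
  have \<omega>0: "\<omega> \<ge> 0" by (simp add: \<omega>_def)
  have S0: "S \<ge> 0" unfolding S_def by (intro suminf_nonneg sS) auto
  define K where "K = \<omega> * S"
  have "integrable lborel (\<lambda>\<xi>::real^'n. exp (-(norm \<xi> powr \<beta> * t))) \<and>
           (\<integral>\<xi>. exp (-(norm (\<xi>::real^'n) powr \<beta> * t)) \<partial>lborel) \<le> K * t powr (- real CARD('n) / \<beta>)"
    if t: "t > 0" for t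
  proof -
    define R where "R k = ((real k + 1)/t) powr (1/\<beta>)" for k :: nat
    have meas: "(\<lambda>\<xi>::real^'n. exp (-(norm \<xi> powr \<beta> * t))) \<in> borel_measurable lborel" by measurable
    have "(\<integral>\<^sup>+\<xi>. ennreal (exp (-(norm \<xi> powr \<beta> * t))) \<partial>(lborel :: (real^'n) measure))
        \<le> (\<integral>\<^sup>+\<xi>. (\<Sum>k. ennreal (exp (- real k)) * indicator (cball (0::real^'n) (R k)) \<xi>) \<partial>lborel)"
      unfolding R_def by (rule nn_integral_mono) (rule kernel_pointwise[OF \<beta> t])
    also have "\<dots> = (\<Sum>k. \<integral>\<^sup>+\<xi>. ennreal (exp (- real k)) * indicator (cball (0::real^'n) (R k)) \<xi> \<partial>lborel)"
      by (intro nn_integral_suminf borel_measurable_times_ennreal borel_measurable_const borel_measurable_indicator) simp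
    also have "\<dots> = (\<Sum>k. ennreal (exp (- real k) * (\<omega> * t powr (- real CARD('n) / \<beta>)) * (real k + 1) powr m))"
    proof (intro suminf_cong)
      fix k :: nat
      have R0: "R k \<ge> 0" by (simp add: R_def)
      have "R k ^ DIM(real^'n) = (real k + 1) powr m * t powr (- real CARD('n) / \<beta>)"
        using t \<beta> unfolding R_def m_def
        by (simp add: powr_power powr_divide powr_minus_divide divide_simps)
      then show "(\<integral>\<^sup>+\<xi>. ennreal (exp (- real k)) * indicator (cball (0::real^'n) (R k)) \<xi> \<partial>lborel) =
         ennreal (exp (- real k) * (\<omega> * t powr (- real CARD('n) / \<beta>)) * (real k + 1) powr m)"
        using R0 \<omega>0 by (simp add: nn_integral_cmult_indicator emeasure_cball \<omega>_def ennreal_mult'[symmetric] mult.commute mult.left_commute)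
    qed
    also have "\<dots> = ennreal (\<Sum>k. exp (- real k) * (\<omega> * t powr (- real CARD('n) / \<beta>)) * (real k + 1) powr m)"
    proof (rule suminf_ennreal2)
      have "summable (\<lambda>k. (\<omega> * t powr (- real CARD('n) / \<beta>)) * (exp (- real k) * (real k + 1) powr m))"
        by (rule summable_mult[OF sS])
      then show "summable (\<lambda>k. exp (- real k) * (\<omega> * t powr (- real CARD('n) / \<beta>)) * (real k + 1) powr m)"
        by (simp add: mult_ac)
    qed (use \<omega>0 in auto)
    also have "(\<Sum>k. exp (- real k) * (\<omega> * t powr (- real CARD('n) / \<beta>)) * (real k + 1) powr m) = K * t powr (- real CARD('n) / \<beta>)"
    proof -
      have "(\<Sum>k. (\<omega> * t powr (- real CARD('n) / \<beta>)) * (exp (- real k) * (real k + 1) powr m)) = (\<omega> * t powr (- real CARD('n) / \<beta>)) * S"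
        unfolding S_def by (rule suminf_mult[OF sS])
      then show ?thesis by (simp add: K_def mult_ac)
    qed
    finally have le: "(\<integral>\<^sup>+\<xi>. ennreal (exp (-(norm \<xi> powr \<beta> * t))) \<partial>(lborel :: (real^'n) measure)) \<le> ennreal (K * t powr (- real CARD('n) / \<beta>))" .
    have int: "integrable lborel (\<lambda>\<xi>::real^'n. exp (-(norm \<xi> powr \<beta> * t)))"
      using le by (intro integrableI_nonneg meas) (auto simp: top.not_eq_extremum intro: le_less_trans)
    have "(\<integral>\<xi>. exp (-(norm (\<xi>::real^'n) powr \<beta> * t)) \<partial>lborel) = enn2real (\<integral>\<^sup>+\<xi>. ennreal (exp (-(norm \<xi> powr \<beta> * t))) \<partial>(lborel :: (real^'n) measure))"
      by (intro integral_eq_nn_integral meas) auto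
    also have "\<dots> \<le> K * t powr (- real CARD('n) / \<beta>)"
    proof (rule enn2real_leI)
      show "0 \<le> K * t powr (- real CARD('n) / \<beta>)" using \<omega>0 S0 unfolding K_def by simp
    qed (rule le)
    finally show ?thesis using int by blast
  qed
  moreover have "K \<ge> 0" using \<omega>0 S0 by (simp add: K_def)
  ultimately show ?thesis by blast
qed

lemma L2_le:
  fixes F :: "real^'n \<Rightarrow> complex" and G :: "real^'n \<Rightarrow> real"
  assumes G: "integrable lborel G" and le: "\<And>\<xi>. (cmod (F \<xi>))\<^sup>2 \<le> G \<xi>"
  shows "L2norm F \<le> sqrt (\<integral>\<xi>. G \<xi> \<partial>lborel)"
proof (cases "integrable lborel (\<lambda>x. (cmod (F x))\<^sup>2)")
  case True
  then have "(\<integral>\<xi>. (cmod (F \<xi>))\<^sup>2 \<partial>lborel) \<le> (\<integral>\<xi>. G \<xi> \<partial>lborel)"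
    using G le by (intro integral_mono) auto
  then show ?thesis unfolding L2norm_def by simp
next
  case False
  have "0 \<le> (\<integral>\<xi>. G \<xi> \<partial>lborel)"
    using le by (intro integral_nonneg_AE) (auto intro: order_trans[OF zero_le_power2])
  then show ?thesis unfolding L2norm_def using False by (simp add: not_integrable_integral_eq)
qed

lemma fourier_bound: "cmod (fourier f \<xi>) \<le> L1norm f"
  unfolding fourier_def L1norm_def
  using integral_norm_bound[of lborel "\<lambda>x. cis (- (x \<bullet> \<xi>)) * f x"] by (simp add: norm_mult)

lemma poly_exp_bound:
  "\<exists>C>0. \<forall>s::real\<ge>0. 1 + s + s^2 + s^3 + s^4 \<le> C * exp (s/2)"
proof -
  have "((\<lambda>x::real. (1 + x + x^2 + x^3 + x^4) / exp (x/2)) \<longlongrightarrow> 0) at_top" by real_asymp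
  then have "eventually (\<lambda>x::real. (1 + x + x^2 + x^3 + x^4) / exp (x/2) < 1) at_top"
    by (rule order_tendstoD) simp
  then obtain X :: real where X: "\<And>x. x \<ge> X \<Longrightarrow> (1 + x + x^2 + x^3 + x^4) / exp (x/2) < 1"
    by (auto simp: eventually_at_top_linorder)
  define X' where "X' = max X 1"
  define C where "C = 1 + X' + X'^2 + X'^3 + X'^4"
  have X'1: "X' \<ge> 1" by (simp add: X'_def)
  have "1 + x + x^2 + x^3 + x^4 \<le> C * exp (x/2)" if x: "x \<ge> 0" for x
  proof (cases "x \<ge> X")
    case True
    then have "1 + x + x^2 + x^3 + x^4 < exp (x/2)" using X[OF True] by (simp add: divide_less_eq)
    also have "\<dots> \<le> C * exp (x/2)" using X'1 unfolding C_def by simp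
    finally show ?thesis by simp
  next
    case False
    then have xX: "x \<le> X'" unfolding X'_def by auto
    have "1 + x + x^2 + x^3 + x^4 \<le> C" unfolding C_def
      using x xX by (intro add_mono power_mono) auto
    also have "C \<le> C * exp (x/2)"
    proof -
      have "1 \<le> exp (x/2)" using x by simp
      moreover have "C \<ge> 0" using X'1 by (simp add: C_def)
      ultimately show ?thesis using mult_left_mono[of 1 "exp (x/2)" C] by simp
    qed
    finally show ?thesis .
  qed
  moreover have "C > 0" using X'1 by (simp add: C_def add_pos_nonneg)
  ultimately show ?thesis by blast
qed

lemma t_large_conv:
  fixes t q :: real assumes "t \<ge> 1"
  shows "t powr (-q) \<le> 2 powr \<bar>q\<bar> * (1+t) powr (-q)"
proof (cases "q \<ge> 0")
  case True
  have "t powr (-q) = (1/t) powr q" using assms by (simp add: powr_minus_divide powr_divide)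
  also have "(1/t) powr q \<le> (2/(1+t)) powr q" using assms True
    by (intro powr_mono2) (auto simp: field_simps)
  also have "\<dots> = 2 powr \<bar>q\<bar> * (1+t) powr (-q)" using assms True
    by (simp add: powr_divide powr_minus_divide)
  finally show ?thesis .
next
  case False
  have "t powr (-q) \<le> (1+t) powr (-q)" using assms False by (intro powr_mono2) auto
  also have "\<dots> \<le> 2 powr \<bar>q\<bar> * (1+t) powr (-q)"
  proof -
    have "1 \<le> 2 powr \<bar>q\<bar>" by (rule ge_one_powr_ge_zero) auto
    then show ?thesis using mult_right_mono[of 1 "2 powr \<bar>q\<bar>" "(1+t) powr (-q)"] by simp
  qed
  finally show ?thesis .
qed

lemma t_small_conv:
  fixes t q :: real assumes "0 \<le> t" "t \<le> 1"
  shows "1 \<le> 2 powr \<bar>q\<bar> * (1+t) powr (-q)"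
proof (cases "q \<ge> 0")
  case True
  have "(1+t) powr q \<le> 2 powr q" using assms True by (intro powr_mono2) auto
  then have "1 \<le> 2 powr q / (1+t) powr q" using assms by (simp add: le_divide_eq)
  then show ?thesis using True assms by (simp add: powr_minus divide_inverse)
next
  case False
  have "1 \<le> (1+t) powr (-q)" using assms False by (intro ge_one_powr_ge_zero) auto
  also have "\<dots> \<le> 2 powr \<bar>q\<bar> * (1+t) powr (-q)"
  proof -
    have "1 \<le> 2 powr \<bar>q\<bar>" by (rule ge_one_powr_ge_zero) auto
    then show ?thesis using mult_right_mono[of 1 "2 powr \<bar>q\<bar>" "(1+t) powr (-q)"] by simp
  qed
  finally show ?thesis .
qed

lemma sqrt3_bound:
  fixes K X0 X1 X2 :: real assumes "K \<ge> 0" "X0 \<ge> 0" "X1 \<ge> 0" "X2 \<ge> 0"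
  shows "sqrt (3 * K^2 * (X0 + X1 + X2)) \<le> 2 * K * (sqrt X0 + sqrt X1 + sqrt X2)"
proof -
  have "(sqrt X0 + sqrt X1 + sqrt X2)^2 \<ge> X0 + X1 + X2"
    using assms by (simp add: power2_eq_square algebra_simps real_sqrt_mult[symmetric])
  then have "3 * K^2 * (X0 + X1 + X2) \<le> (2 * K * (sqrt X0 + sqrt X1 + sqrt X2))^2"
  proof -
    assume h: "(sqrt X0 + sqrt X1 + sqrt X2)^2 \<ge> X0 + X1 + X2"
    have "3 * K^2 * (X0 + X1 + X2) \<le> 4 * K^2 * (X0 + X1 + X2)" using assms by (intro mult_right_mono) auto
    also have "\<dots> \<le> 4 * K^2 * (sqrt X0 + sqrt X1 + sqrt X2)^2" by (intro mult_left_mono h) auto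
    also have "\<dots> = (2 * K * (sqrt X0 + sqrt X1 + sqrt X2))^2" by (simp add: power_mult_distrib)
    finally show ?thesis .
  qed
  then show ?thesis using assms
    by (intro real_le_lsqrt) auto
qed

lemma sq3: fixes a b c :: real shows "(a + b + c)\<^sup>2 \<le> 3 * (a\<^sup>2 + b\<^sup>2 + c\<^sup>2)"
proof -
  have "3 * (a\<^sup>2 + b\<^sup>2 + c\<^sup>2) - (a + b + c)\<^sup>2 = (a-b)\<^sup>2 + (b-c)\<^sup>2 + (a-c)\<^sup>2"
    by (simp add: power2_eq_square algebra_simps)
  moreover have "0 \<le> (a-b)\<^sup>2 + (b-c)\<^sup>2 + (a-c)\<^sup>2" by simp
  ultimately show ?thesis by linarith
qed

lemma est_combine:
  fixes F W0 W1 W2 :: "real^'n \<Rightarrow> complex" and \<beta> Kk t K Ls q :: real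
  assumes \<beta>: "\<beta> > 0" and Kk0: "Kk \<ge> 0"
    and ker: "\<forall>t>0. integrable lborel (\<lambda>\<xi>::real^'n. exp (-(norm \<xi> powr \<beta> * t))) \<and>
           (\<integral>\<xi>. exp (-(norm (\<xi>::real^'n) powr \<beta> * t)) \<partial>lborel) \<le> Kk * t powr (- real CARD('n) / \<beta>)"
    and W0: "integrable lborel (\<lambda>\<xi>. (cmod (W0 \<xi>))\<^sup>2)"
    and W1: "integrable lborel (\<lambda>\<xi>. (cmod (W1 \<xi>))\<^sup>2)"
    and W2: "integrable lborel (\<lambda>\<xi>. (cmod (W2 \<xi>))\<^sup>2)"
    and t: "t \<ge> 0" and K: "K \<ge> 0" and Ls: "Ls \<ge> 0"
    and small: "t \<le> 1 \<Longrightarrow> \<forall>\<xi>. cmod (F \<xi>) \<le> K * (cmod (W0 \<xi>) + cmod (W1 \<xi>) + cmod (W2 \<xi>))"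
    and large: "t \<ge> 1 \<Longrightarrow> \<forall>\<xi>. cmod (F \<xi>) \<le> K * t powr (real CARD('n)/(2*\<beta>) - q) * Ls * exp (-(norm \<xi> powr \<beta> * t)/2)"
  shows "L2norm F \<le> (2 + sqrt Kk) * K * 2 powr \<bar>q\<bar> * (1+t) powr (-q) * (L2norm W0 + L2norm W1 + L2norm W2 + Ls)"
proof -
  define X0 where "X0 = (\<integral>\<xi>. (cmod (W0 \<xi>))\<^sup>2 \<partial>lborel)"
  define X1 where "X1 = (\<integral>\<xi>. (cmod (W1 \<xi>))\<^sup>2 \<partial>lborel)"
  define X2 where "X2 = (\<integral>\<xi>. (cmod (W2 \<xi>))\<^sup>2 \<partial>lborel)"
  have X0: "X0 \<ge> 0" "L2norm W0 = sqrt X0" unfolding X0_def L2norm_def by auto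
  have X1: "X1 \<ge> 0" "L2norm W1 = sqrt X1" unfolding X1_def L2norm_def by auto
  have X2: "X2 \<ge> 0" "L2norm W2 = sqrt X2" unfolding X2_def L2norm_def by auto
  define S where "S = L2norm W0 + L2norm W1 + L2norm W2"
  have S0: "S \<ge> 0" unfolding S_def using X0 X1 X2 by simp
  define Z where "Z = 2 powr \<bar>q\<bar> * (1+t) powr (-q)"
  have Z0: "Z \<ge> 0" unfolding Z_def by simp
  have sK: "sqrt Kk \<ge> 0" using Kk0 by simp
  show ?thesis
  proof (cases "t \<le> 1")
    case True
    have Z1: "1 \<le> Z" unfolding Z_def using t_small_conv[OF t True] .
    have "L2norm F \<le> sqrt (\<integral>\<xi>. 3 * K^2 * ((cmod (W0 \<xi>))\<^sup>2 + (cmod (W1 \<xi>))\<^sup>2 + (cmod (W2 \<xi>))\<^sup>2) \<partial>lborel)"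
    proof (rule L2_le)
      show "integrable lborel (\<lambda>\<xi>. 3 * K^2 * ((cmod (W0 \<xi>))\<^sup>2 + (cmod (W1 \<xi>))\<^sup>2 + (cmod (W2 \<xi>))\<^sup>2))"
        using W0 W1 W2 by (intro integrable_mult_right Bochner_Integration.integrable_add)
      fix \<xi>
      have "cmod (F \<xi>) \<le> K * (cmod (W0 \<xi>) + cmod (W1 \<xi>) + cmod (W2 \<xi>))" using small True by blast
      then have "(cmod (F \<xi>))\<^sup>2 \<le> (K * (cmod (W0 \<xi>) + cmod (W1 \<xi>) + cmod (W2 \<xi>)))\<^sup>2"
        by (intro power_mono) auto
      also have "\<dots> = K^2 * (cmod (W0 \<xi>) + cmod (W1 \<xi>) + cmod (W2 \<xi>))\<^sup>2"
        by (simp only: power_mult_distrib)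
      also have "\<dots> \<le> K^2 * (3 * ((cmod (W0 \<xi>))\<^sup>2 + (cmod (W1 \<xi>))\<^sup>2 + (cmod (W2 \<xi>))\<^sup>2))"
        by (intro mult_left_mono sq3) auto
      also have "\<dots> = 3 * K^2 * ((cmod (W0 \<xi>))\<^sup>2 + (cmod (W1 \<xi>))\<^sup>2 + (cmod (W2 \<xi>))\<^sup>2)"
        by simp
      finally show "(cmod (F \<xi>))\<^sup>2 \<le> 3 * K^2 * ((cmod (W0 \<xi>))\<^sup>2 + (cmod (W1 \<xi>))\<^sup>2 + (cmod (W2 \<xi>))\<^sup>2)" .
    qed
    also have "(\<integral>\<xi>. 3 * K^2 * ((cmod (W0 \<xi>))\<^sup>2 + (cmod (W1 \<xi>))\<^sup>2 + (cmod (W2 \<xi>))\<^sup>2) \<partial>lborel) = 3 * K^2 * (X0 + X1 + X2)"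
      unfolding X0_def X1_def X2_def using W0 W1 W2 by (simp add: integral_add)
    also have "sqrt (3 * K^2 * (X0 + X1 + X2)) \<le> 2 * K * S"
      unfolding S_def X0 X1 X2 by (rule sqrt3_bound[OF K X0(1) X1(1) X2(1)])
    also have "2 * K * S \<le> (2 + sqrt Kk) * K * Z * (S + Ls)"
    proof -
      have "2 * K * S \<le> (2 + sqrt Kk) * K * S" using sK K S0 by (intro mult_right_mono) auto
      also have "\<dots> \<le> (2 + sqrt Kk) * K * Z * S"
      proof -
        have "((2 + sqrt Kk) * K * S) * 1 \<le> ((2 + sqrt Kk) * K * S) * Z" using Z1 sK K S0 by (intro mult_left_mono) auto
        then show ?thesis by (simp add: mult_ac)
      qed
      also have "\<dots> \<le> (2 + sqrt Kk) * K * Z * (S + Ls)" using Ls sK K Z0 by (intro mult_left_mono) auto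
      finally show ?thesis .
    qed
    finally show ?thesis by (simp add: Z_def S_def)
  next
    case False
    then have t1: "t \<ge> 1" and tpos: "t > 0" by auto
    define p where "p = real CARD('n)/(2*\<beta>)"
    define G where "G \<xi> = (K * t powr (p - q) * Ls)^2 * exp (-(norm \<xi> powr \<beta> * t))" for \<xi> :: "real^'n"
    have kt: "integrable lborel (\<lambda>\<xi>::real^'n. exp (-(norm \<xi> powr \<beta> * t)))"
      "(\<integral>\<xi>. exp (-(norm (\<xi>::real^'n) powr \<beta> * t)) \<partial>lborel) \<le> Kk * t powr (- real CARD('n) / \<beta>)"
      using ker tpos by auto
    have "L2norm F \<le> sqrt (\<integral>\<xi>. G \<xi> \<partial>lborel)"
    proof (rule L2_le)
      show "integrable lborel G" unfolding G_def[abs_def] using kt by (intro integrable_mult_right)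
      fix \<xi> :: "real^'n"
      have "cmod (F \<xi>) \<le> K * t powr (p - q) * Ls * exp (-(norm \<xi> powr \<beta> * t)/2)"
        using large t1 unfolding p_def by blast
      then have "(cmod (F \<xi>))\<^sup>2 \<le> (K * t powr (p - q) * Ls * exp (-(norm \<xi> powr \<beta> * t)/2))\<^sup>2"
        by (intro power_mono) auto
      also have "\<dots> = G \<xi>" unfolding G_def
        by (simp add: power_mult_distrib exp_double[symmetric])
      finally show "(cmod (F \<xi>))\<^sup>2 \<le> G \<xi>" .
    qed
    also have "(\<integral>\<xi>. G \<xi> \<partial>lborel) = (K * t powr (p - q) * Ls)^2 * (\<integral>\<xi>. exp (-(norm (\<xi>::real^'n) powr \<beta> * t)) \<partial>lborel)"
      unfolding G_def by simp
    also have "\<dots> \<le> (K * t powr (p - q) * Ls)^2 * (Kk * t powr (- real CARD('n) / \<beta>))"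
      using kt(2) by (intro mult_left_mono) auto
    also have "\<dots> = (K * Ls * sqrt Kk * t powr (-q))^2"
    proof -
      have "(t powr (p - q))^2 * t powr (- real CARD('n) / \<beta>) = (t powr (-q))^2"
      proof -
        have e1: "(t powr (p - q))^2 = t powr (2*(p-q))" using tpos by (simp add: powr_power)
        have e2: "(t powr (-q))^2 = t powr (2*(-q))" using tpos by (simp add: powr_power)
        have e3: "2*(p-q) + (- real CARD('n) / \<beta>) = 2*(-q)" using \<beta> unfolding p_def by (simp add: field_simps)
        show ?thesis unfolding e1 e2 powr_add[symmetric] e3 ..
      qed
      note h = this
      have "(K * t powr (p - q) * Ls)^2 * (Kk * t powr (- real CARD('n) / \<beta>)) = K^2 * Ls^2 * Kk * ((t powr (p - q))^2 * t powr (- real CARD('n) / \<beta>))"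
        by (simp add: power_mult_distrib mult_ac)
      also have "\<dots> = K^2 * Ls^2 * Kk * (t powr (-q))^2" by (simp only: h)
      also have "\<dots> = (K * Ls * sqrt Kk * t powr (-q))^2" using Kk0 by (simp add: power_mult_distrib)
      finally show ?thesis .
    qed
    also have "sqrt \<dots> = K * Ls * sqrt Kk * t powr (-q)" using K Ls sK by simp
    also have "\<dots> \<le> K * Ls * sqrt Kk * Z" unfolding Z_def using t_large_conv[OF t1, of q] K Ls sK
      by (intro mult_left_mono) auto
    also have "\<dots> \<le> (2 + sqrt Kk) * K * Z * (S + Ls)"
    proof -
      have "K * Ls * sqrt Kk * Z = (sqrt Kk) * (K * Z) * Ls" by simp
      also have "\<dots> \<le> (2 + sqrt Kk) * (K * Z) * (S + Ls)"
        using K Z0 sK S0 Ls by (intro mult_mono) auto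
      finally show ?thesis by (simp add: mult_ac)
    qed
    finally show ?thesis by (simp add: Z_def S_def)
  qed
qed

lemma scalar_bounds:
  fixes a t Cp :: real
  assumes a: "a \<ge> 0" and t: "t \<ge> 0"
    and Cp: "\<forall>s::real\<ge>0. 1 + s + s^2 + s^3 + s^4 \<le> Cp * exp (s/2)"
  defines "g \<equiv> Cp * exp (-(a*t)/2)"
  shows "exp (-(a*t)) * (1 + a*t + (a*t)^2/2) \<le> g"
    and "exp (-(a*t)) * t * (1 + a*t) \<le> t * g"
    and "exp (-(a*t)) * t^2/2 \<le> t^2 * g"
    and "a^2 * (exp (-(a*t)) * t * (1 + a*t)) \<le> a * g"
    and "a^2 * (exp (-(a*t)) * t^2/2) \<le> g"
    and "a^2 * (exp (-(a*t)) * (1 + a*t + (a*t)^2/2)) \<le> a^2 * g"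
    and "t > 0 \<Longrightarrow> a^2 * (exp (-(a*t)) * (1 + a*t + (a*t)^2/2)) \<le> g / t^2"
    and "t > 0 \<Longrightarrow> a^2 * (exp (-(a*t)) * t * (1 + a*t)) \<le> g / t"
    and "0 \<le> g" and "g \<le> Cp"
proof -
  define s where "s = a*t"
  have s0: "s \<ge> 0" using a t by (simp add: s_def)
  define E where "E = exp (-s)"
  have E0: "E > 0" by (simp add: E_def)
  have P: "1 + s + s^2 + s^3 + s^4 \<le> Cp * exp (s/2)" using Cp s0 by auto
  have EP: "E * (1 + s + s^2 + s^3 + s^4) \<le> g"
  proof -
    have "E * (1 + s + s^2 + s^3 + s^4) \<le> E * (Cp * exp (s/2))" using P E0 by (intro mult_left_mono) auto
    also have "\<dots> = g" unfolding g_def E_def s_def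
      by (simp add: exp_minus_inverse field_simps exp_add[symmetric] flip: exp_diff)
    finally show ?thesis .
  qed
  have Cp0: "Cp > 0"
  proof -
    have "1 \<le> Cp * exp (0/2)" using Cp by (metis order.refl add_0 mult_zero_left power_0_left zero_neq_numeral add.right_neutral)
    then show ?thesis by simp
  qed
  show g0: "0 \<le> g" unfolding g_def using Cp0 by simp
  show "g \<le> Cp" unfolding g_def using Cp0 s0 a t by (simp add: mult_le_cancel_left1)
  have p2: "0 \<le> s^2" "0 \<le> s^3" "0 \<le> s^4" using s0 by auto
  show "exp (-(a*t)) * (1 + a*t + (a*t)^2/2) \<le> g"
  proof -
    have "E * (1 + s + s^2/2) \<le> E * (1 + s + s^2 + s^3 + s^4)" using E0 p2 by (intro mult_left_mono) auto
    then show ?thesis using EP unfolding E_def s_def by linarith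
  qed
  show "exp (-(a*t)) * t * (1 + a*t) \<le> t * g"
  proof -
    have "E * (1 + s) \<le> E * (1 + s + s^2 + s^3 + s^4)" using E0 p2 by (intro mult_left_mono) auto
    then have "E * (1 + s) \<le> g" using EP by linarith
    then have "t * (E * (1 + s)) \<le> t * g" using t by (intro mult_left_mono) auto
    then show ?thesis unfolding E_def s_def by (simp add: mult_ac)
  qed
  show "exp (-(a*t)) * t^2/2 \<le> t^2 * g"
  proof -
    have "E \<le> E * (1 + s + s^2 + s^3 + s^4)" using E0 p2 s0 by (simp add: mult_le_cancel_left1)
    then have "E/2 \<le> g" using EP E0 by linarith
    then have "t^2 * (E/2) \<le> t^2 * g" by (intro mult_left_mono) auto
    then show ?thesis unfolding E_def s_def by (simp add: mult_ac)
  qed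
  show "a^2 * (exp (-(a*t)) * t * (1 + a*t)) \<le> a * g"
  proof -
    have "E * (s + s^2) \<le> E * (1 + s + s^2 + s^3 + s^4)" using E0 p2 by (intro mult_left_mono) auto
    then have "E * (s + s^2) \<le> g" using EP by linarith
    then have "a * (E * (s + s^2)) \<le> a * g" using a by (intro mult_left_mono) auto
    then show ?thesis unfolding E_def s_def by (simp add: power2_eq_square algebra_simps)
  qed
  show "a^2 * (exp (-(a*t)) * t^2/2) \<le> g"
  proof -
    have "E * (s^2/2) \<le> E * (1 + s + s^2 + s^3 + s^4)" using E0 p2 s0 by (intro mult_left_mono) auto
    then have "E * (s^2/2) \<le> g" using EP by linarith
    then show ?thesis unfolding E_def s_def by (simp add: power2_eq_square algebra_simps)
  qed
  show "a^2 * (exp (-(a*t)) * (1 + a*t + (a*t)^2/2)) \<le> a^2 * g"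
  proof -
    have "E * (1 + s + s^2/2) \<le> E * (1 + s + s^2 + s^3 + s^4)" using E0 p2 by (intro mult_left_mono) auto
    then have "E * (1 + s + s^2/2) \<le> g" using EP by linarith
    then have "a^2 * (E * (1 + s + s^2/2)) \<le> a^2 * g" by (intro mult_left_mono) auto
    then show ?thesis unfolding E_def s_def by simp
  qed
  show "a^2 * (exp (-(a*t)) * (1 + a*t + (a*t)^2/2)) \<le> g / t^2" if tp: "t > 0"
  proof -
    have "E * (s^2 + s^3 + s^4/2) \<le> E * (1 + s + s^2 + s^3 + s^4)" using E0 p2 by (intro mult_left_mono) auto
    then have "E * (s^2 + s^3 + s^4/2) \<le> g" using EP by linarith
    moreover have "a^2 * (exp (-(a*t)) * (1 + a*t + (a*t)^2/2)) = E * (s^2 + s^3 + s^4/2) / t^2"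
      unfolding E_def s_def using tp by (simp add: field_simps power2_eq_square power3_eq_cube power4_eq_xxxx)
    ultimately show ?thesis using tp by (simp add: divide_right_mono)
  qed
  show "a^2 * (exp (-(a*t)) * t * (1 + a*t)) \<le> g / t" if tp: "t > 0"
  proof -
    have "E * (s^2 + s^3) \<le> E * (1 + s + s^2 + s^3 + s^4)" using E0 p2 by (intro mult_left_mono) auto
    then have "E * (s^2 + s^3) \<le> g" using EP by linarith
    moreover have "a^2 * (exp (-(a*t)) * t * (1 + a*t)) = E * (s^2 + s^3) / t"
      unfolding E_def s_def using tp by (simp add: field_simps power2_eq_square power3_eq_cube)
    ultimately show ?thesis using tp by (simp add: divide_right_mono)
  qed
qed

lemma norm3:
  fixes A B C :: complex and x y z :: real
  assumes "x \<ge> 0" "y \<ge> 0" "z \<ge> 0"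
  shows "cmod (of_real x * A + of_real y * B + of_real z * C) \<le> x * cmod A + y * cmod B + z * cmod C"
proof -
  have "cmod (of_real x * A + of_real y * B + of_real z * C) \<le> cmod (of_real x * A) + cmod (of_real y * B) + cmod (of_real z * C)"
    by (meson norm_triangle_le norm_triangle_ineq add_mono order_refl)
  then show ?thesis using assms by (simp add: norm_mult)
qed

lemma pointwise:
  fixes A0 A1 A2 :: complex and a t Cp L0 L1 L2 w0 w1 :: real
  assumes a: "a \<ge> 0" and t: "t \<ge> 0"
    and Cp: "\<forall>s::real\<ge>0. 1 + s + s^2 + s^3 + s^4 \<le> Cp * exp (s/2)"
    and n0: "cmod A0 \<le> L0" and n1: "cmod A1 \<le> L1" and n2: "cmod A2 \<le> L2"
    and w0: "1 \<le> w0" "a^2 \<le> w0" and w1: "1 \<le> w1" "a \<le> w1"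
  defines "V \<equiv> complex_of_real (exp (-(a*t))) * (A0 + (A1 + of_real a * A0) * of_real t
            + (A2 + 2 * of_real a * A1 + of_real (a^2) * A0) * of_real (t^2/2))"
    and "R \<equiv> complex_of_real (t^2/2 * exp (- a * t)) * A2"
  shows "t \<le> 1 \<Longrightarrow> cmod V \<le> Cp * (w0 * cmod A0 + w1 * cmod A1 + cmod A2)"
    and "t \<ge> 1 \<Longrightarrow> cmod V \<le> Cp * t^2 * (L0 + L1 + L2) * exp (-(a*t)/2)"
    and "t \<le> 1 \<Longrightarrow> cmod (of_real (a^2) * V) \<le> Cp * (w0 * cmod A0 + w1 * cmod A1 + cmod A2)"
    and "t \<ge> 1 \<Longrightarrow> cmod (of_real (a^2) * V) \<le> Cp * 1 * (L0 + L1 + L2) * exp (-(a*t)/2)"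
    and "t \<le> 1 \<Longrightarrow> cmod (V - R) \<le> Cp * (w0 * cmod A0 + w1 * cmod A1 + cmod A2)"
    and "t \<ge> 1 \<Longrightarrow> cmod (V - R) \<le> Cp * t * (L0 + L1 + L2) * exp (-(a*t)/2)"
    and "t \<le> 1 \<Longrightarrow> cmod (of_real (a^2) * (V - R)) \<le> Cp * (w0 * cmod A0 + w1 * cmod A1 + cmod A2)"
    and "t \<ge> 1 \<Longrightarrow> cmod (of_real (a^2) * (V - R)) \<le> Cp * (1/t) * (L0 + L1 + L2) * exp (-(a*t)/2)"
    and "A0 = 0 \<Longrightarrow> A1 = 0 \<Longrightarrow> cmod (of_real (a^2) * V) \<le> Cp * cmod A2"
proof -
  define g where "g = Cp * exp (-(a*t)/2)"
  define m0 where "m0 = exp (-(a*t)) * (1 + a*t + (a*t)^2/2)"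
  define m1 where "m1 = exp (-(a*t)) * t * (1 + a*t)"
  define m2 where "m2 = exp (-(a*t)) * t^2/2"
  note sb = scalar_bounds[OF a t Cp, folded g_def m0_def m1_def m2_def]
  have m0: "m0 \<ge> 0" unfolding m0_def using a t by simp
  have m1: "m1 \<ge> 0" unfolding m1_def using a t by simp
  have m2: "m2 \<ge> 0" unfolding m2_def using a t by simp
  have g0: "g \<ge> 0" "g \<le> Cp" using sb(9,10) by auto
  have c0: "cmod A0 \<ge> 0" "cmod A1 \<ge> 0" "cmod A2 \<ge> 0" by auto
  have Vd: "V = of_real m0 * A0 + of_real m1 * A1 + of_real m2 * A2"
    unfolding V_def m0_def m1_def m2_def by (simp add: algebra_simps power2_eq_square)
  have VR: "V - R = of_real m0 * A0 + of_real m1 * A1 + of_real 0 * A2"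
    unfolding Vd R_def m2_def by (simp add: algebra_simps)
  have aV: "of_real (a^2) * V = of_real (a^2 * m0) * A0 + of_real (a^2 * m1) * A1 + of_real (a^2 * m2) * A2"
    unfolding Vd by (simp add: algebra_simps)
  have aVR: "of_real (a^2) * (V - R) = of_real (a^2 * m0) * A0 + of_real (a^2 * m1) * A1 + of_real 0 * A2"
    unfolding VR by (simp add: algebra_simps)
  have NV: "cmod V \<le> m0 * cmod A0 + m1 * cmod A1 + m2 * cmod A2" unfolding Vd using m0 m1 m2 by (rule norm3)
  have NVR: "cmod (V - R) \<le> m0 * cmod A0 + m1 * cmod A1 + 0 * cmod A2" unfolding VR using m0 m1 by (intro norm3) auto
  have NaV: "cmod (of_real (a^2) * V) \<le> a^2 * m0 * cmod A0 + a^2 * m1 * cmod A1 + a^2 * m2 * cmod A2"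
    unfolding aV using m0 m1 m2 by (intro norm3) auto
  have NaVR: "cmod (of_real (a^2) * (V - R)) \<le> a^2 * m0 * cmod A0 + a^2 * m1 * cmod A1 + 0 * cmod A2"
    unfolding aVR using m0 m1 by (intro norm3) auto
  have wA0: "cmod A0 \<le> w0 * cmod A0" "a^2 * cmod A0 \<le> w0 * cmod A0"
    using w0 c0 by (auto intro: mult_right_mono[of 1 w0, simplified] mult_right_mono)
  have wA1: "cmod A1 \<le> w1 * cmod A1" "a * cmod A1 \<le> w1 * cmod A1"
    using w1 c0 by (auto intro: mult_right_mono[of 1 w1, simplified] mult_right_mono)
  {
    assume t1: "t \<le> 1"
    have tg: "t * g \<le> g" "t^2 * g \<le> g" using t t1 g0
      by (auto intro: mult_right_mono[of t 1, simplified] mult_right_mono[of "t^2" 1, simplified] power_le_one)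
    have s0: "m0 * cmod A0 \<le> Cp * cmod A0" using sb(1) g0 c0 by (intro mult_right_mono) auto
    have s1: "m1 * cmod A1 \<le> Cp * cmod A1" using sb(2) tg g0 c0 by (intro mult_right_mono) auto
    have s2: "m2 * cmod A2 \<le> Cp * cmod A2" using sb(3) tg g0 c0 by (intro mult_right_mono) auto
    have Cp0: "Cp \<ge> 0" using g0 by linarith
    have f0: "Cp * cmod A0 \<le> Cp * (w0 * cmod A0)" using wA0 Cp0 by (intro mult_left_mono) auto
    have f1: "Cp * cmod A1 \<le> Cp * (w1 * cmod A1)" using wA1 Cp0 by (intro mult_left_mono) auto
    show "cmod V \<le> Cp * (w0 * cmod A0 + w1 * cmod A1 + cmod A2)"
      using NV s0 s1 s2 f0 f1 by (simp add: algebra_simps)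
    show "cmod (V - R) \<le> Cp * (w0 * cmod A0 + w1 * cmod A1 + cmod A2)"
    proof -
      have "0 \<le> Cp * cmod A2" using Cp0 by simp
      then show ?thesis unfolding distrib_left using NVR s0 s1 f0 f1 by linarith
    qed
    have a0: "a^2 * m0 * cmod A0 \<le> Cp * (a^2 * cmod A0)"
    proof -
      have "a^2 * m0 * cmod A0 \<le> (a^2 * g) * cmod A0" using sb(6) c0 by (intro mult_right_mono) auto
      also have "\<dots> \<le> (a^2 * Cp) * cmod A0" using g0 c0 by (intro mult_right_mono mult_left_mono) auto
      finally show ?thesis by (simp add: mult_ac)
    qed
    have a1: "a^2 * m1 * cmod A1 \<le> Cp * (a * cmod A1)"
    proof -
      have "a^2 * m1 * cmod A1 \<le> (a * g) * cmod A1" using sb(4) c0 by (intro mult_right_mono) auto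
      also have "\<dots> \<le> (a * Cp) * cmod A1" using g0 c0 a by (intro mult_right_mono mult_left_mono) auto
      finally show ?thesis by (simp add: mult_ac)
    qed
    have a2: "a^2 * m2 * cmod A2 \<le> Cp * cmod A2"
    proof -
      have "a^2 * m2 * cmod A2 \<le> g * cmod A2" using sb(5) c0 by (intro mult_right_mono) auto
      also have "\<dots> \<le> Cp * cmod A2" using g0 c0 by (intro mult_right_mono) auto
      finally show ?thesis .
    qed
    have f0': "Cp * (a^2 * cmod A0) \<le> Cp * (w0 * cmod A0)" using wA0 Cp0 by (intro mult_left_mono) auto
    have f1': "Cp * (a * cmod A1) \<le> Cp * (w1 * cmod A1)" using wA1 Cp0 by (intro mult_left_mono) auto
    show "cmod (of_real (a^2) * V) \<le> Cp * (w0 * cmod A0 + w1 * cmod A1 + cmod A2)"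
      using NaV a0 a1 a2 f0' f1' by (simp add: algebra_simps)
    show "cmod (of_real (a^2) * (V - R)) \<le> Cp * (w0 * cmod A0 + w1 * cmod A1 + cmod A2)"
    proof -
      have "0 \<le> Cp * cmod A2" using Cp0 by simp
      then show ?thesis unfolding distrib_left using NaVR a0 a1 f0' f1' by linarith
    qed
  }
  {
    assume t1: "t \<ge> 1"
    have tp: "t > 0" using t1 by simp
    have Ls: "0 \<le> L0" "0 \<le> L1" "0 \<le> L2" using n0 n1 n2 c0 by linarith+
    have t2: "1 \<le> t^2" "t \<le> t^2" using t1 one_le_power[of t 2] power_increasing[of 1 2 t] by auto
    have l0: "m0 * cmod A0 \<le> g * L0" using sb(1) g0 c0 n0 m0 by (intro mult_mono) auto
    have l1: "m1 * cmod A1 \<le> (t * g) * L1" using sb(2) g0 c0 n1 t by (intro mult_mono) auto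
    have l2: "m2 * cmod A2 \<le> (t^2 * g) * L2" using sb(3) g0 c0 n2 by (intro mult_mono) auto
    have "g * L0 \<le> t^2 * g * L0" using t2 g0 Ls by (intro mult_right_mono) (auto intro: mult_right_mono[of 1 "t^2", simplified])
    moreover have "t * g * L1 \<le> t^2 * g * L1" using t2 g0 Ls by (intro mult_right_mono) auto
    ultimately show "cmod V \<le> Cp * t^2 * (L0 + L1 + L2) * exp (-(a*t)/2)"
      using NV l0 l1 l2 unfolding g_def by (simp add: algebra_simps)
    have "g * L0 \<le> t * g * L0" using t1 g0 Ls by (intro mult_right_mono) (auto intro: mult_right_mono[of 1 t, simplified])
    then show "cmod (V - R) \<le> Cp * t * (L0 + L1 + L2) * exp (-(a*t)/2)"
    proof -
      assume h: "g * L0 \<le> t * g * L0"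
      have e: "Cp * t * (L0 + L1 + L2) * exp (-(a*t)/2) = t * g * L0 + t * g * L1 + t * g * L2"
        unfolding g_def by (simp add: algebra_simps)
      have "0 \<le> t * g * L2" using tp g0 Ls by simp
      then show ?thesis unfolding e using h NVR l0 l1 by linarith
    qed
    have it: "1/t^2 \<le> 1/t" "1/t \<le> 1" using t1 t2 tp by (auto simp: divide_simps)
    have b0: "a^2 * m0 * cmod A0 \<le> (g / t^2) * L0" using sb(7)[OF tp] g0 c0 n0 tp by (intro mult_mono) auto
    have b1: "a^2 * m1 * cmod A1 \<le> (g / t) * L1" using sb(8)[OF tp] g0 c0 n1 tp by (intro mult_mono) auto
    have b2: "a^2 * m2 * cmod A2 \<le> g * L2" using sb(5) g0 c0 n2 by (intro mult_mono) auto
    have d1: "g / t^2 \<le> g" using divide_left_mono[of 1 "t^2" g] g0 t2 tp by simp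
    have d2: "g / t \<le> g" using divide_left_mono[of 1 "t" g] g0 t1 by simp
    have "g / t^2 * L0 \<le> g * L0" "g / t * L1 \<le> g * L1"
      by (rule mult_right_mono[OF d1 Ls(1)], rule mult_right_mono[OF d2 Ls(2)])
    then show "cmod (of_real (a^2) * V) \<le> Cp * 1 * (L0 + L1 + L2) * exp (-(a*t)/2)"
      using NaV b0 b1 b2 unfolding g_def by (simp add: algebra_simps)
    have "g / t^2 * L0 \<le> g / t * L0"
      using g0 Ls tp t1 t2 it by (intro mult_right_mono divide_left_mono) auto
    then show "cmod (of_real (a^2) * (V - R)) \<le> Cp * (1/t) * (L0 + L1 + L2) * exp (-(a*t)/2)"
    proof -
      assume h: "g / t^2 * L0 \<le> g / t * L0"
      have e: "Cp * (1/t) * (L0 + L1 + L2) * exp (-(a*t)/2) = g / t * L0 + g / t * L1 + g / t * L2"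
        unfolding g_def by (simp add: algebra_simps add_divide_distrib)
      have "0 \<le> g / t * L2" using tp g0 Ls by simp
      then show ?thesis unfolding e using h NaVR b0 b1 by linarith
    qed
  }
  {
    assume "A0 = 0" "A1 = 0"
    then have "cmod (of_real (a^2) * V) \<le> a^2 * m2 * cmod A2" using NaV by simp
    also have "\<dots> \<le> Cp * cmod A2" using sb(5) g0 c0 by (intro mult_right_mono) auto
    finally show "cmod (of_real (a^2) * V) \<le> Cp * cmod A2" .
  }
qed

lemma pointwise_all:
  fixes A0 A1 A2 :: "'x \<Rightarrow> complex" and a w0 w1 :: "'x \<Rightarrow> real" and VV :: "'x \<Rightarrow> complex"
    and t Cp L0 L1 L2 :: real
  assumes a: "\<And>\<xi>. a \<xi> \<ge> 0" and t: "t \<ge> 0"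
    and Cp: "\<forall>s::real\<ge>0. 1 + s + s^2 + s^3 + s^4 \<le> Cp * exp (s/2)"
    and n0: "\<And>\<xi>. cmod (A0 \<xi>) \<le> L0" and n1: "\<And>\<xi>. cmod (A1 \<xi>) \<le> L1" and n2: "\<And>\<xi>. cmod (A2 \<xi>) \<le> L2"
    and w0: "\<And>\<xi>. 1 \<le> w0 \<xi>" "\<And>\<xi>. (a \<xi>)^2 \<le> w0 \<xi>" and w1: "\<And>\<xi>. 1 \<le> w1 \<xi>" "\<And>\<xi>. a \<xi> \<le> w1 \<xi>"
    and Vf: "\<And>\<xi>. VV \<xi> = complex_of_real (exp (-(a \<xi>*t))) * (A0 \<xi> + (A1 \<xi> + of_real (a \<xi>) * A0 \<xi>) * of_real t
            + (A2 \<xi> + 2 * of_real (a \<xi>) * A1 \<xi> + of_real ((a \<xi>)^2) * A0 \<xi>) * of_real (t^2/2))"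
  shows "t \<le> 1 \<Longrightarrow> cmod (VV \<xi>) \<le> Cp * (w0 \<xi> * cmod (A0 \<xi>) + w1 \<xi> * cmod (A1 \<xi>) + cmod (A2 \<xi>))"
    and "t \<ge> 1 \<Longrightarrow> cmod (VV \<xi>) \<le> Cp * t^2 * (L0 + L1 + L2) * exp (-(a \<xi>*t)/2)"
    and "t \<le> 1 \<Longrightarrow> cmod (of_real ((a \<xi>)^2) * VV \<xi>) \<le> Cp * (w0 \<xi> * cmod (A0 \<xi>) + w1 \<xi> * cmod (A1 \<xi>) + cmod (A2 \<xi>))"
    and "t \<ge> 1 \<Longrightarrow> cmod (of_real ((a \<xi>)^2) * VV \<xi>) \<le> Cp * 1 * (L0 + L1 + L2) * exp (-(a \<xi>*t)/2)"
    and "t \<le> 1 \<Longrightarrow> cmod (VV \<xi> - complex_of_real (t^2/2 * exp (- a \<xi> * t)) * A2 \<xi>) \<le> Cp * (w0 \<xi> * cmod (A0 \<xi>) + w1 \<xi> * cmod (A1 \<xi>) + cmod (A2 \<xi>))"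
    and "t \<ge> 1 \<Longrightarrow> cmod (VV \<xi> - complex_of_real (t^2/2 * exp (- a \<xi> * t)) * A2 \<xi>) \<le> Cp * t * (L0 + L1 + L2) * exp (-(a \<xi>*t)/2)"
    and "t \<le> 1 \<Longrightarrow> cmod (of_real ((a \<xi>)^2) * (VV \<xi> - complex_of_real (t^2/2 * exp (- a \<xi> * t)) * A2 \<xi>)) \<le> Cp * (w0 \<xi> * cmod (A0 \<xi>) + w1 \<xi> * cmod (A1 \<xi>) + cmod (A2 \<xi>))"
    and "t \<ge> 1 \<Longrightarrow> cmod (of_real ((a \<xi>)^2) * (VV \<xi> - complex_of_real (t^2/2 * exp (- a \<xi> * t)) * A2 \<xi>)) \<le> Cp * (1/t) * (L0 + L1 + L2) * exp (-(a \<xi>*t)/2)"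
    and "A0 \<xi> = 0 \<Longrightarrow> A1 \<xi> = 0 \<Longrightarrow> cmod (of_real ((a \<xi>)^2) * VV \<xi>) \<le> Cp * cmod (A2 \<xi>)"
  unfolding Vf
  using pointwise[where a = "a \<xi>" and t = t and Cp = Cp and ?A0.0 = "A0 \<xi>" and ?A1.0 = "A1 \<xi>"
      and ?A2.0 = "A2 \<xi>" and ?L0.0 = L0 and ?L1.0 = L1 and ?L2.0 = L2 and ?w0.0 = "w0 \<xi>" and ?w1.0 = "w1 \<xi>",
      OF a t Cp n0 n1 n2 w0(1) w0(2) w1(1) w1(2)]
  by blast+

lemma powr_pw:
  fixes \<xi> :: "real^'n" and \<sigma> :: real
  shows "norm \<xi> powr (2*\<sigma>) = (norm \<xi> powr (2*\<sigma>/3))^3"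
    and "norm \<xi> powr (4*\<sigma>/3) = (norm \<xi> powr (2*\<sigma>/3))^2"
proof -
  show "norm \<xi> powr (2*\<sigma>) = (norm \<xi> powr (2*\<sigma>/3))^3"
    by (cases "\<xi> = 0") (simp_all add: powr_power)
  show "norm \<xi> powr (4*\<sigma>/3) = (norm \<xi> powr (2*\<sigma>/3))^2"
    by (cases "\<xi> = 0") (simp_all add: powr_power)
qed

lemma solution_formula:
  fixes \<sigma> :: real and V :: "real \<Rightarrow> real^'n \<Rightarrow> complex" and \<xi> :: "real^'n"
  assumes sol: "solves_L \<sigma> 3 u0 u1 u2 V" and t: "t \<ge> 0"
  defines "a \<equiv> norm \<xi> powr (2*\<sigma>/3)"
  shows "V t \<xi> = complex_of_real (exp (-(a*t))) * (u0 \<xi> + (u1 \<xi> + of_real a * u0 \<xi>) * of_real t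
            + (u2 \<xi> + 2 * of_real a * u1 \<xi> + of_real (a^2) * u0 \<xi>) * of_real (t^2/2))"
proof -
  obtain D1 D2 D3 :: "real \<Rightarrow> complex" where
    d1: "\<forall>t\<ge>0. ((\<lambda>s. V s \<xi>) has_vector_derivative D1 t) (at t within {0..})" and
    d2: "\<forall>t\<ge>0. (D1 has_vector_derivative D2 t) (at t within {0..})" and
    d3: "\<forall>t>0. (D2 has_vector_derivative D3 t) (at t)" and
    eq: "\<forall>t>0. D3 t + complex_of_real (norm \<xi> powr (2*\<sigma>)) * V t \<xi>
                + complex_of_real (3 * norm \<xi> powr (2*\<sigma>/3)) * D2 t
                + complex_of_real (3 * norm \<xi> powr (4*\<sigma>/3)) * D1 t = 0" and
    i: "V 0 \<xi> = u0 \<xi>" "D1 0 = u1 \<xi>" "D2 0 = u2 \<xi>"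
    using sol unfolding solves_L_def by blast
  have eq': "\<forall>t>0. D3 t + of_real (a^3) * V t \<xi> + of_real (3*a) * D2 t + of_real (3*a^2) * D1 t = 0"
    using eq unfolding a_def powr_pw[of \<xi> \<sigma>] by simp
  from ode_unique[OF d1 d2 d3 eq' t] show ?thesis unfolding i .
qed

lemma sq_powr:
  fixes x e :: real assumes "x \<ge> 0"
  shows "x powr (2*e) = (x^2) powr e"
proof (cases "x = 0")
  case False
  then have "x^2 = x powr 2" using assms by (simp add: powr_numeral)
  then show ?thesis by (simp add: powr_powr)
qed simp

lemma weight_facts:
  fixes \<xi> :: "real^'n" and \<sigma> :: real assumes \<sigma>: "\<sigma> > 0"
  shows "1 \<le> (1 + (norm \<xi>)\<^sup>2) powr ((4*\<sigma>/3)/2)"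
    and "(norm \<xi> powr (2*\<sigma>/3))^2 \<le> (1 + (norm \<xi>)\<^sup>2) powr ((4*\<sigma>/3)/2)"
    and "1 \<le> (1 + (norm \<xi>)\<^sup>2) powr ((2*\<sigma>/3)/2)"
    and "norm \<xi> powr (2*\<sigma>/3) \<le> (1 + (norm \<xi>)\<^sup>2) powr ((2*\<sigma>/3)/2)"
    and "cmod (inh_weight s f \<xi>) = (1 + (norm \<xi>)\<^sup>2) powr (s/2) * cmod (f \<xi>)"
    and "inh_weight 0 f \<xi> = f \<xi>"
    and "hom_weight (4*\<sigma>/3) f \<xi> = of_real ((norm \<xi> powr (2*\<sigma>/3))^2) * f \<xi>"
proof -
  show "1 \<le> (1 + (norm \<xi>)\<^sup>2) powr ((4*\<sigma>/3)/2)" using \<sigma> by (intro ge_one_powr_ge_zero) auto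
  show "1 \<le> (1 + (norm \<xi>)\<^sup>2) powr ((2*\<sigma>/3)/2)" using \<sigma> by (intro ge_one_powr_ge_zero) auto
  have "(norm \<xi> powr (2*\<sigma>/3))^2 = norm \<xi> powr (4*\<sigma>/3)" by (simp add: powr_pw)
  also have "\<dots> = ((norm \<xi>)^2) powr (2*\<sigma>/3)" using sq_powr[of "norm \<xi>" "2*\<sigma>/3"] by simp
  also have "\<dots> \<le> (1 + (norm \<xi>)\<^sup>2) powr (2*\<sigma>/3)" using \<sigma> by (intro powr_mono2) auto
  finally show "(norm \<xi> powr (2*\<sigma>/3))^2 \<le> (1 + (norm \<xi>)\<^sup>2) powr ((4*\<sigma>/3)/2)" by simp
  have "norm \<xi> powr (2*\<sigma>/3) = ((norm \<xi>)^2) powr (\<sigma>/3)" using sq_powr[of "norm \<xi>" "\<sigma>/3"] by simp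
  also have "\<dots> \<le> (1 + (norm \<xi>)\<^sup>2) powr (\<sigma>/3)" using \<sigma> by (intro powr_mono2) auto
  finally show "norm \<xi> powr (2*\<sigma>/3) \<le> (1 + (norm \<xi>)\<^sup>2) powr ((2*\<sigma>/3)/2)" by simp
  show "cmod (inh_weight s f \<xi>) = (1 + (norm \<xi>)\<^sup>2) powr (s/2) * cmod (f \<xi>)"
    unfolding inh_weight_def by (simp add: norm_mult)
  have "1 + (norm \<xi>)\<^sup>2 \<noteq> 0" by (metis add_pos_nonneg zero_less_one zero_le_power2 less_irrefl)
  then show "inh_weight 0 f \<xi> = f \<xi>" unfolding inh_weight_def by simp
  show "hom_weight (4*\<sigma>/3) f \<xi> = of_real ((norm \<xi> powr (2*\<sigma>/3))^2) * f \<xi>"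
    unfolding hom_weight_def by (simp add: powr_pw)
qed

lemma finish_le:
  fixes X c1 c2 Z B :: real
  assumes "X \<le> c1 * Z * B" "c1 \<le> c2" "Z \<ge> 0" "B \<ge> 0"
  shows "X \<le> c2 * Z * B"
proof -
  have "c1 * Z * B \<le> c2 * Z * B" using assms by (intro mult_right_mono) auto
  then show ?thesis using assms(1) by linarith
qed

lemma part1:
  fixes \<sigma> Kk Cp t :: real and v0 v1 v2 :: "real^'n \<Rightarrow> complex" and V :: "real \<Rightarrow> real^'n \<Rightarrow> complex"
  assumes \<sigma>: "\<sigma> > 0" and Kk0: "Kk \<ge> 0"
    and ker: "\<forall>t>0. integrable lborel (\<lambda>\<xi>::real^'n. exp (-(norm \<xi> powr (2*\<sigma>/3) * t))) \<and>
           (\<integral>\<xi>. exp (-(norm (\<xi>::real^'n) powr (2*\<sigma>/3) * t)) \<partial>lborel) \<le> Kk * t powr (- real CARD('n) / (2*\<sigma>/3))"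
    and Cp0: "Cp > 0" and Cp: "\<forall>s::real\<ge>0. 1 + s + s^2 + s^3 + s^4 \<le> Cp * exp (s/2)"
    and inB: "in_B \<sigma> v0 v1 v2"
    and sol: "solves_L \<sigma> 3 (fourier v0) (fourier v1) (fourier v2) V"
    and t: "t \<ge> 0"
  defines "p \<equiv> real CARD('n) / (2*(2*\<sigma>/3))"
  defines "CC \<equiv> (2 + sqrt Kk) * Cp * 2 powr (p + 2)"
  shows "L2norm (V t) \<le> CC * (1 + t) powr (- (3 * real CARD('n) - 8*\<sigma>) / (4*\<sigma>)) * B_norm \<sigma> v0 v1 v2"
    and "L2norm (hom_weight (4*\<sigma>/3) (V t)) \<le> CC * (1 + t) powr (- (3 * real CARD('n)) / (4*\<sigma>)) * B_norm \<sigma> v0 v1 v2"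
    and "L2norm (\<lambda>\<xi>. V t \<xi> - complex_of_real (t\<^sup>2 / 2 * exp (- (norm \<xi> powr (2*\<sigma>/3)) * t)) * fourier v2 \<xi>)
          \<le> CC * (1 + t) powr (- (3 * real CARD('n) - 4*\<sigma>) / (4*\<sigma>)) * B_norm \<sigma> v0 v1 v2"
    and "L2norm (hom_weight (4*\<sigma>/3) (\<lambda>\<xi>. V t \<xi> - complex_of_real (t\<^sup>2 / 2 * exp (- (norm \<xi> powr (2*\<sigma>/3)) * t)) * fourier v2 \<xi>))
          \<le> CC * (1 + t) powr (- (3 * real CARD('n) + 4*\<sigma>) / (4*\<sigma>)) * B_norm \<sigma> v0 v1 v2"
proof -
  have \<beta>: "2*\<sigma>/3 > 0" using \<sigma> by simp
  have p0: "p \<ge> 0" using \<sigma> unfolding p_def by simp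
  define W0 where "W0 = inh_weight (4*\<sigma>/3) (fourier v0)"
  define W1 where "W1 = inh_weight (2*\<sigma>/3) (fourier v1)"
  define W2 where "W2 = inh_weight 0 (fourier v2)"
  define L0 where "L0 = L1norm v0"
  define L1 where "L1 = L1norm v1"
  define L2 where "L2 = L1norm v2"
  define Ls where "Ls = L0 + L1 + L2"
  have iW: "integrable lborel (\<lambda>\<xi>. (cmod (W0 \<xi>))\<^sup>2)" "integrable lborel (\<lambda>\<xi>. (cmod (W1 \<xi>))\<^sup>2)"
      "integrable lborel (\<lambda>\<xi>. (cmod (W2 \<xi>))\<^sup>2)"
    using inB unfolding in_B_def in_Hs_L1_def sq_int_def W0_def W1_def W2_def by auto
  have nA: "cmod (fourier v0 \<xi>) \<le> L0" "cmod (fourier v1 \<xi>) \<le> L1" "cmod (fourier v2 \<xi>) \<le> L2" for \<xi>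
    unfolding L0_def L1_def L2_def by (rule fourier_bound)+
  have Ls0: "Ls \<ge> 0" unfolding Ls_def using nA[of 0] by (meson add_nonneg_nonneg norm_ge_zero order_trans)
  have BN: "B_norm \<sigma> v0 v1 v2 = L2norm W0 + L2norm W1 + L2norm W2 + Ls"
    unfolding B_norm_def Hs_L1_norm_def W0_def W1_def W2_def Ls_def L0_def L1_def L2_def by simp
  have B0: "B_norm \<sigma> v0 v1 v2 \<ge> 0" unfolding BN using Ls0 by (simp add: L2norm_def)
  define a where "a \<xi> = norm \<xi> powr (2*\<sigma>/3)" for \<xi> :: "real^'n"
  define w0 where "w0 \<xi> = (1 + (norm \<xi>)\<^sup>2) powr ((4*\<sigma>/3)/2)" for \<xi> :: "real^'n"
  define w1 where "w1 \<xi> = (1 + (norm \<xi>)\<^sup>2) powr ((2*\<sigma>/3)/2)" for \<xi> :: "real^'n"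
  have cW: "cmod (W0 \<xi>) = w0 \<xi> * cmod (fourier v0 \<xi>)" "cmod (W1 \<xi>) = w1 \<xi> * cmod (fourier v1 \<xi>)"
      "cmod (W2 \<xi>) = cmod (fourier v2 \<xi>)" for \<xi>
    unfolding W0_def W1_def W2_def w0_def w1_def using weight_facts[OF \<sigma>, where \<xi> = \<xi>] by auto
  have wf: "a \<xi> \<ge> 0" "1 \<le> w0 \<xi>" "(a \<xi>)^2 \<le> w0 \<xi>" "1 \<le> w1 \<xi>" "a \<xi> \<le> w1 \<xi>" for \<xi>
    unfolding a_def w0_def w1_def using weight_facts[OF \<sigma>, where \<xi> = \<xi>] by auto
  have Vf: "V t \<xi> = complex_of_real (exp (-(a \<xi>*t))) * (fourier v0 \<xi> + (fourier v1 \<xi> + of_real (a \<xi>) * fourier v0 \<xi>) * of_real t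
            + (fourier v2 \<xi> + 2 * of_real (a \<xi>) * fourier v1 \<xi> + of_real ((a \<xi>)^2) * fourier v0 \<xi>) * of_real (t^2/2))" for \<xi>
    unfolding a_def by (rule solution_formula[OF sol t])
  note pw' = pointwise_all[where a = a and t = t and Cp = Cp and ?A0.0 = "fourier v0" and ?A1.0 = "fourier v1"
      and ?A2.0 = "fourier v2" and ?L0.0 = L0 and ?L1.0 = L1 and ?L2.0 = L2 and ?w0.0 = w0 and ?w1.0 = w1 and VV = "V t",
      OF wf(1) t Cp nA(1) nA(2) nA(3) wf(2) wf(3) wf(4) wf(5) Vf]
  have hw: "hom_weight (4*\<sigma>/3) f \<xi> = of_real ((a \<xi>)^2) * f \<xi>" for f \<xi>
    unfolding a_def by (rule weight_facts(7)[OF \<sigma>])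
  have sm: "Cp * (w0 \<xi> * cmod (fourier v0 \<xi>) + w1 \<xi> * cmod (fourier v1 \<xi>) + cmod (fourier v2 \<xi>))
      = Cp * (cmod (W0 \<xi>) + cmod (W1 \<xi>) + cmod (W2 \<xi>))" for \<xi> using cW by simp
  have ex: "exp (-(a \<xi> * t)/2) = exp (-(norm \<xi> powr (2*\<sigma>/3) * t)/2)" for \<xi> unfolding a_def ..
  have powr_q: "(2 + sqrt Kk) * Cp * 2 powr \<bar>q\<bar> \<le> CC" if "\<bar>q\<bar> \<le> p + 2" for q
    unfolding CC_def using that Cp0 Kk0 by (intro mult_left_mono powr_mono) auto
  note EC = est_combine[OF \<beta> Kk0 ker iW(1) iW(2) iW(3) t less_imp_le[OF Cp0] Ls0]
  have Z0: "(1+t) powr x \<ge> 0" for x by simp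
  have tp: "t \<ge> 1 \<Longrightarrow> t > 0" by simp
  have pe: "real CARD('n) / (2 * (2*\<sigma>/3)) = p" unfolding p_def ..
  have "L2norm (V t) \<le> (2 + sqrt Kk) * Cp * 2 powr \<bar>p - 2\<bar> * (1+t) powr (-(p - 2)) * (L2norm W0 + L2norm W1 + L2norm W2 + Ls)"
  proof (rule EC)
    show "\<forall>\<xi>. cmod (V t \<xi>) \<le> Cp * (cmod (W0 \<xi>) + cmod (W1 \<xi>) + cmod (W2 \<xi>))" if "t \<le> 1"
      using pw'(1)[OF that] unfolding sm by blast
    show "\<forall>\<xi>. cmod (V t \<xi>) \<le> Cp * t powr (real CARD('n) / (2 * (2*\<sigma>/3)) - (p - 2)) * Ls * exp (-(norm \<xi> powr (2*\<sigma>/3) * t)/2)" if "t \<ge> 1"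
      using pw'(2)[OF that] tp[OF that] unfolding a_def pe Ls_def by (simp add: powr_numeral)
  qed
  also have "(1+t) powr (-(p - 2)) = (1 + t) powr (- (3 * real CARD('n) - 8*\<sigma>) / (4*\<sigma>))"
    using \<sigma> unfolding p_def by (intro arg_cong[where f="\<lambda>x. (1+t) powr x"]) (simp add: field_simps)
  finally show "L2norm (V t) \<le> CC * (1 + t) powr (- (3 * real CARD('n) - 8*\<sigma>) / (4*\<sigma>)) * B_norm \<sigma> v0 v1 v2"
    unfolding BN[symmetric] by (rule finish_le[OF _ powr_q[of "p - 2"]]) (use B0 p0 in auto)
  have "L2norm (hom_weight (4*\<sigma>/3) (V t)) \<le> (2 + sqrt Kk) * Cp * 2 powr \<bar>p\<bar> * (1+t) powr (-p) * (L2norm W0 + L2norm W1 + L2norm W2 + Ls)"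
  proof (rule EC)
    show "\<forall>\<xi>. cmod (hom_weight (4*\<sigma>/3) (V t) \<xi>) \<le> Cp * (cmod (W0 \<xi>) + cmod (W1 \<xi>) + cmod (W2 \<xi>))" if "t \<le> 1"
      using pw'(3)[OF that] unfolding hw sm by blast
    show "\<forall>\<xi>. cmod (hom_weight (4*\<sigma>/3) (V t) \<xi>) \<le> Cp * t powr (real CARD('n) / (2 * (2*\<sigma>/3)) - p) * Ls * exp (-(norm \<xi> powr (2*\<sigma>/3) * t)/2)" if "t \<ge> 1"
      using pw'(4)[OF that] tp[OF that] unfolding hw a_def pe Ls_def by simp
  qed
  also have "(1+t) powr (-p) = (1 + t) powr (- (3 * real CARD('n)) / (4*\<sigma>))"
    using \<sigma> unfolding p_def by (intro arg_cong[where f="\<lambda>x. (1+t) powr x"]) (simp add: field_simps)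
  finally show "L2norm (hom_weight (4*\<sigma>/3) (V t)) \<le> CC * (1 + t) powr (- (3 * real CARD('n)) / (4*\<sigma>)) * B_norm \<sigma> v0 v1 v2"
    unfolding BN[symmetric] by (rule finish_le[OF _ powr_q[of "p"]]) (use B0 p0 in auto)
  have R: "complex_of_real (t\<^sup>2 / 2 * exp (- (norm \<xi> powr (2*\<sigma>/3)) * t)) * fourier v2 \<xi>
      = complex_of_real (t\<^sup>2 / 2 * exp (- a \<xi> * t)) * fourier v2 \<xi>" for \<xi> unfolding a_def ..
  have "L2norm (\<lambda>\<xi>. V t \<xi> - complex_of_real (t\<^sup>2 / 2 * exp (- (norm \<xi> powr (2*\<sigma>/3)) * t)) * fourier v2 \<xi>)
     \<le> (2 + sqrt Kk) * Cp * 2 powr \<bar>p - 1\<bar> * (1+t) powr (-(p - 1)) * (L2norm W0 + L2norm W1 + L2norm W2 + Ls)"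
  proof (rule EC)
    show "\<forall>\<xi>. cmod (V t \<xi> - complex_of_real (t\<^sup>2 / 2 * exp (- (norm \<xi> powr (2*\<sigma>/3)) * t)) * fourier v2 \<xi>) \<le> Cp * (cmod (W0 \<xi>) + cmod (W1 \<xi>) + cmod (W2 \<xi>))" if "t \<le> 1"
      using pw'(5)[OF that] unfolding R sm by blast
    show "\<forall>\<xi>. cmod (V t \<xi> - complex_of_real (t\<^sup>2 / 2 * exp (- (norm \<xi> powr (2*\<sigma>/3)) * t)) * fourier v2 \<xi>) \<le> Cp * t powr (real CARD('n) / (2 * (2*\<sigma>/3)) - (p - 1)) * Ls * exp (-(norm \<xi> powr (2*\<sigma>/3) * t)/2)" if "t \<ge> 1"
      using pw'(6)[OF that] tp[OF that] unfolding a_def pe Ls_def by simp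
  qed
  also have "(1+t) powr (-(p - 1)) = (1 + t) powr (- (3 * real CARD('n) - 4*\<sigma>) / (4*\<sigma>))"
    using \<sigma> unfolding p_def by (intro arg_cong[where f="\<lambda>x. (1+t) powr x"]) (simp add: field_simps)
  finally show "L2norm (\<lambda>\<xi>. V t \<xi> - complex_of_real (t\<^sup>2 / 2 * exp (- (norm \<xi> powr (2*\<sigma>/3)) * t)) * fourier v2 \<xi>)
          \<le> CC * (1 + t) powr (- (3 * real CARD('n) - 4*\<sigma>) / (4*\<sigma>)) * B_norm \<sigma> v0 v1 v2"
    unfolding BN[symmetric] by (rule finish_le[OF _ powr_q[of "p - 1"]]) (use B0 p0 in auto)
  have "L2norm (hom_weight (4*\<sigma>/3) (\<lambda>\<xi>. V t \<xi> - complex_of_real (t\<^sup>2 / 2 * exp (- (norm \<xi> powr (2*\<sigma>/3)) * t)) * fourier v2 \<xi>))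
     \<le> (2 + sqrt Kk) * Cp * 2 powr \<bar>p + 1\<bar> * (1+t) powr (-(p + 1)) * (L2norm W0 + L2norm W1 + L2norm W2 + Ls)"
  proof (rule EC)
    show "\<forall>\<xi>. cmod (hom_weight (4*\<sigma>/3) (\<lambda>\<xi>. V t \<xi> - complex_of_real (t\<^sup>2 / 2 * exp (- (norm \<xi> powr (2*\<sigma>/3)) * t)) * fourier v2 \<xi>) \<xi>) \<le> Cp * (cmod (W0 \<xi>) + cmod (W1 \<xi>) + cmod (W2 \<xi>))" if "t \<le> 1"
      using pw'(7)[OF that] unfolding hw R sm by blast
    show "\<forall>\<xi>. cmod (hom_weight (4*\<sigma>/3) (\<lambda>\<xi>. V t \<xi> - complex_of_real (t\<^sup>2 / 2 * exp (- (norm \<xi> powr (2*\<sigma>/3)) * t)) * fourier v2 \<xi>) \<xi>) \<le> Cp * t powr (real CARD('n) / (2 * (2*\<sigma>/3)) - (p + 1)) * Ls * exp (-(norm \<xi> powr (2*\<sigma>/3) * t)/2)" if "t \<ge> 1"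
      using pw'(8)[OF that] tp[OF that] unfolding hw a_def pe Ls_def by (simp add: powr_minus_divide)
  qed
  also have "(1+t) powr (-(p + 1)) = (1 + t) powr (- (3 * real CARD('n) + 4*\<sigma>) / (4*\<sigma>))"
    using \<sigma> unfolding p_def by (intro arg_cong[where f="\<lambda>x. (1+t) powr x"]) (simp add: field_simps)
  finally show "L2norm (hom_weight (4*\<sigma>/3) (\<lambda>\<xi>. V t \<xi> - complex_of_real (t\<^sup>2 / 2 * exp (- (norm \<xi> powr (2*\<sigma>/3)) * t)) * fourier v2 \<xi>))
          \<le> CC * (1 + t) powr (- (3 * real CARD('n) + 4*\<sigma>) / (4*\<sigma>)) * B_norm \<sigma> v0 v1 v2"
    unfolding BN[symmetric] by (rule finish_le[OF _ powr_q[of "p + 1"]]) (use B0 p0 in auto)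
qed

lemma B_norm_nonneg: "B_norm \<sigma> v0 v1 v2 \<ge> 0"
  unfolding B_norm_def Hs_L1_norm_def L2norm_def L1norm_def
  by (intro add_nonneg_nonneg real_sqrt_ge_zero integral_nonneg_AE) auto

lemma part2:
  fixes \<sigma> Cp t :: real and g :: "real^'n \<Rightarrow> complex" and V :: "real \<Rightarrow> real^'n \<Rightarrow> complex"
  assumes \<sigma>: "\<sigma> > 0" and Cp0: "Cp > 0" and Cp: "\<forall>s::real\<ge>0. 1 + s + s^2 + s^3 + s^4 \<le> Cp * exp (s/2)"
    and g: "sq_int g" and sol: "solves_L \<sigma> 3 (\<lambda>_. 0) (\<lambda>_. 0) g V" and t: "t \<ge> 0"
  shows "L2norm (hom_weight (4*\<sigma>/3) (V t)) \<le> Cp * L2norm g"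
proof -
  have ig: "integrable lborel (\<lambda>\<xi>. (cmod (g \<xi>))\<^sup>2)" using g unfolding sq_int_def by auto
  have "L2norm (hom_weight (4*\<sigma>/3) (V t)) \<le> sqrt (\<integral>\<xi>. Cp^2 * (cmod (g \<xi>))\<^sup>2 \<partial>lborel)"
  proof (rule L2_le)
    show "integrable lborel (\<lambda>\<xi>. Cp^2 * (cmod (g \<xi>))\<^sup>2)" using ig by (rule integrable_mult_right)
    fix \<xi> :: "real^'n"
    define a where "a = norm \<xi> powr (2*\<sigma>/3)"
    have a0: "a \<ge> 0" unfolding a_def by simp
    have Vf: "V t \<xi> = complex_of_real (exp (-(a*t))) * (0 + (0 + of_real a * 0) * of_real t
            + (g \<xi> + 2 * of_real a * 0 + of_real (a^2) * 0) * of_real (t^2/2))"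
      unfolding a_def by (rule solution_formula[OF sol t])
    have hw: "hom_weight (4*\<sigma>/3) (V t) \<xi> = of_real (a^2) * V t \<xi>"
      unfolding a_def by (rule weight_facts(7)[OF \<sigma>])
    have "cmod (hom_weight (4*\<sigma>/3) (V t) \<xi>) \<le> Cp * cmod (g \<xi>)"
      unfolding hw Vf
      by (rule pointwise(9)[where a = a and t = t and Cp = Cp and ?A0.0 = 0 and ?A1.0 = 0 and ?A2.0 = "g \<xi>"
          and ?L0.0 = 0 and ?L1.0 = 0 and ?L2.0 = "cmod (g \<xi>)" and ?w0.0 = "max 1 (a^2)" and ?w1.0 = "max 1 a",
          OF a0 t Cp]) auto
    then have "(cmod (hom_weight (4*\<sigma>/3) (V t) \<xi>))\<^sup>2 \<le> (Cp * cmod (g \<xi>))\<^sup>2"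
      by (intro power_mono) auto
    then show "(cmod (hom_weight (4*\<sigma>/3) (V t) \<xi>))\<^sup>2 \<le> Cp^2 * (cmod (g \<xi>))\<^sup>2"
      by (simp add: power_mult_distrib)
  qed
  also have "(\<integral>\<xi>. Cp^2 * (cmod (g \<xi>))\<^sup>2 \<partial>lborel) = Cp^2 * (\<integral>\<xi>. (cmod (g \<xi>))\<^sup>2 \<partial>lborel)" by simp
  also have "sqrt \<dots> = Cp * L2norm g" unfolding L2norm_def using Cp0 by (simp add: real_sqrt_mult)
  finally show ?thesis .
qed

theorem proposition3p4:
  fixes \<sigma> :: real
  assumes "\<sigma> > 0"
  shows "\<exists>C>0.
    (\<forall>(v0::real^'n::finite \<Rightarrow> complex) v1 v2 V. in_B \<sigma> v0 v1 v2 \<and>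
        solves_L \<sigma> 3 (fourier v0) (fourier v1) (fourier v2) V \<longrightarrow>
      (\<forall>t\<ge>0.
        L2norm (V t) \<le> C * (1 + t) powr (- (3 * real CARD('n) - 8*\<sigma>) / (4*\<sigma>)) * B_norm \<sigma> v0 v1 v2 \<and>
        L2norm (hom_weight (4*\<sigma>/3) (V t)) \<le> C * (1 + t) powr (- (3 * real CARD('n)) / (4*\<sigma>)) * B_norm \<sigma> v0 v1 v2 \<and>
        L2norm (\<lambda>\<xi>. V t \<xi> - complex_of_real (t\<^sup>2 / 2 * exp (- (norm \<xi> powr (2*\<sigma>/3)) * t)) * fourier v2 \<xi>)
          \<le> C * (1 + t) powr (- (3 * real CARD('n) - 4*\<sigma>) / (4*\<sigma>)) * B_norm \<sigma> v0 v1 v2 \<and>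
        L2norm (hom_weight (4*\<sigma>/3) (\<lambda>\<xi>. V t \<xi> - complex_of_real (t\<^sup>2 / 2 * exp (- (norm \<xi> powr (2*\<sigma>/3)) * t)) * fourier v2 \<xi>))
          \<le> C * (1 + t) powr (- (3 * real CARD('n) + 4*\<sigma>) / (4*\<sigma>)) * B_norm \<sigma> v0 v1 v2)) \<and>
    (\<forall>(g::real^'n \<Rightarrow> complex) V. sq_int g \<and> solves_L \<sigma> 3 (\<lambda>_. 0) (\<lambda>_. 0) g V \<longrightarrow>
      (\<forall>t\<ge>0. L2norm (hom_weight (4*\<sigma>/3) (V t)) \<le> C * L2norm g))"
proof -
  have \<sigma>: "\<sigma> > 0" by fact
  have \<beta>: "2*\<sigma>/3 > 0" using \<sigma> by simp
  obtain Kk where Kk0: "Kk \<ge> 0" and ker: "\<forall>t>0. integrable lborel (\<lambda>\<xi>::real^'n. exp (-(norm \<xi> powr (2*\<sigma>/3) * t))) \<and>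
           (\<integral>\<xi>. exp (-(norm (\<xi>::real^'n) powr (2*\<sigma>/3) * t)) \<partial>lborel) \<le> Kk * t powr (- real CARD('n) / (2*\<sigma>/3))"
    using kernel_bound[OF \<beta>] by blast
  obtain Cp :: real where Cp0: "Cp > 0" and Cp: "\<forall>s::real\<ge>0. 1 + s + s^2 + s^3 + s^4 \<le> Cp * exp (s/2)"
    using poly_exp_bound by blast
  define p where "p = real CARD('n) / (2*(2*\<sigma>/3))"
  define CC where "CC = (2 + sqrt Kk) * Cp * 2 powr (p + 2)"
  define C where "C = CC + Cp"
  have CC0: "CC \<ge> 0" unfolding CC_def using Kk0 Cp0 by simp
  have C0: "C > 0" unfolding C_def using CC0 Cp0 by simp
  have CCC: "CC \<le> C" "Cp \<le> C" unfolding C_def using CC0 Cp0 by auto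
  show ?thesis
  proof (intro exI[of _ C] conjI C0 allI impI)
    fix v0 v1 v2 :: "real^'n \<Rightarrow> complex" and V :: "real \<Rightarrow> real^'n \<Rightarrow> complex" and t :: real
    assume h: "in_B \<sigma> v0 v1 v2 \<and> solves_L \<sigma> 3 (fourier v0) (fourier v1) (fourier v2) V" and t: "t \<ge> 0"
    note P = part1[OF \<sigma> Kk0 ker Cp0 Cp conjunct1[OF h] conjunct2[OF h] t, folded p_def, folded CC_def]
    have B0: "B_norm \<sigma> v0 v1 v2 \<ge> 0" by (rule B_norm_nonneg)
    show "L2norm (V t) \<le> C * (1 + t) powr (- (3 * real CARD('n) - 8*\<sigma>) / (4*\<sigma>)) * B_norm \<sigma> v0 v1 v2"
      by (rule finish_le[OF P(1) CCC(1) _ B0]) simp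
    show "L2norm (hom_weight (4*\<sigma>/3) (V t)) \<le> C * (1 + t) powr (- (3 * real CARD('n)) / (4*\<sigma>)) * B_norm \<sigma> v0 v1 v2"
      by (rule finish_le[OF P(2) CCC(1) _ B0]) simp
    show "L2norm (\<lambda>\<xi>. V t \<xi> - complex_of_real (t\<^sup>2 / 2 * exp (- (norm \<xi> powr (2*\<sigma>/3)) * t)) * fourier v2 \<xi>)
          \<le> C * (1 + t) powr (- (3 * real CARD('n) - 4*\<sigma>) / (4*\<sigma>)) * B_norm \<sigma> v0 v1 v2"
      by (rule finish_le[OF P(3) CCC(1) _ B0]) simp
    show "L2norm (hom_weight (4*\<sigma>/3) (\<lambda>\<xi>. V t \<xi> - complex_of_real (t\<^sup>2 / 2 * exp (- (norm \<xi> powr (2*\<sigma>/3)) * t)) * fourier v2 \<xi>))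
          \<le> C * (1 + t) powr (- (3 * real CARD('n) + 4*\<sigma>) / (4*\<sigma>)) * B_norm \<sigma> v0 v1 v2"
      by (rule finish_le[OF P(4) CCC(1) _ B0]) simp
  next
    fix g :: "real^'n \<Rightarrow> complex" and V :: "real \<Rightarrow> real^'n \<Rightarrow> complex" and t :: real
    assume h: "sq_int g \<and> solves_L \<sigma> 3 (\<lambda>_. 0) (\<lambda>_. 0) g V" and t: "t \<ge> 0"
    have "L2norm (hom_weight (4*\<sigma>/3) (V t)) \<le> Cp * L2norm g"
      using part2[OF \<sigma> Cp0 Cp conjunct1[OF h] conjunct2[OF h] t] .
    also have "\<dots> \<le> C * L2norm g" using CCC(2) by (intro mult_right_mono) (auto simp: L2norm_def)
    finally show "L2norm (hom_weight (4*\<sigma>/3) (V t)) \<le> C * L2norm g" .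
  qed
qed

end
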